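(* Let $A=\sigma(R)\langle x_1,\dots,x_n\rangle$ be a $\sigma$-PBW extension such that $c_{\alpha,\beta}$ is invertible for all $\alpha,\beta\in\mathbb N^n$. Let $\mathbf f,\mathbf h\in A^m$, let $\theta\in\mathbb N^n$, and let $F=\{\mathbf f_1,\dots,\mathbf f_t\}$ be a finite set of nonzero vectors of $A^m$. Then: (i) If $\mathbf f\xrightarrow{F}\mathbf h$, then there exists $\mathbf p\in A^m$ with $\mathbf p=\mathbf 0$ or $lm(x^\theta\mathbf f)\succ lm(\mathbf p)$ such that $x^\theta\mathbf f+\mathbf p\xrightarrow{F}x^\theta\mathbf h$. If $A$ is quasi-commutative, one can take $\mathbf p=\mathbf 0$. (ii) If $\mathbf f\xrightarrow{F}_+\mathbf h$ and $\mathbf p\in A^m$ satisfies $\mathbf p=\mathbf 0$ or $lm(\mathbf h)\succ lm(\mathbf p)$, then $\mathbf f+\mathbf p\xrightarrow{F}_+\mathbf h+\mathbf p$. (iii) If $\mathbf f\xrightarrow{F}_+\mathbf h$, then there exists $\mathbf p\in A^m$ with $\mathbf p=\mathbf 0$ or $lm(x^\theta\mathbf f)\succ lm(\mathbf p)$ such that $x^\theta\mathbf f+\mathbf p\xrightarrow{F}_+x^\theta\mathbf h$. If $A$ is quasi-commutative, one can take $\mathbf p=\mathbf 0$. (iv) If $\mathbf f\xrightarrow{F}_+\mathbf 0$, then there exists $\mathbf p\in A^m$ with $\mathbf p=\mathbf 0$ or $lm(x^\theta\mathbf f)\succ lm(\mathbf p)$ such that $x^\theta\mathbf f+\mathbf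 p\xrightarrow{F}_+\mathbf 0$. If $A$ is quasi-commutative, one can take $\mathbf p=\mathbf 0$.
   Context: Let $R\subseteq A$ be rings. $A$ is a $\sigma$-PBW extension of $R$, written $A=\sigma(R)\langle x_1,\dots,x_n\rangle$, if there are $x_1,\dots,x_n\in A\setminus R$ such that: (i) $A$ is a free left $R$-module with basis $\mathrm{Mon}(A)=\{x^\alpha=x_1^{\alpha_1}\cdots x_n^{\alpha_n}:\alpha\in\mathbb N^n\}$, with $x^0=1$; (ii) for every $i$ and every $r\in R\setminus\{0\}$ there is $c_{i,r}\in R\setminus\{0\}$ with $x_ir-c_{i,r}x_i\in R$; (iii) for all $i,j$ there is $c_{i,j}\in R\setminus\{0\}$ with $x_jx_i-c_{i,j}x_ix_j\in R+Rx_1+\dots+Rx_n$. There are injective ring endomorphisms $\sigma_i$ of $R$ and $\sigma_i$-derivations $\delta_i$ with $x_ir=\sigma_i(r)x_i+\delta_i(r)$. Write $\sigma^\alpha=\sigma_1^{\alpha_1}\circ\cdots\circ\sigma_n^{\alpha_n}$ and $|\alpha|=\sum\alpha_i$. The degree of a nonzero element of $A$ is the maximum of $|\alpha|$ over the monomials $x^\alpha$ occurring in it. For $\alpha,\beta\in\mathbb N^n$ there are unique $c_{\alpha,\beta}\in R$ (left invertible) and $p_{\alpha,\beta}\in A$ with $x^\alpha x^\beta=c_{\alpha,\beta}x^{\alpha+\beta}+p_{\alpha,\beta}$, where $p_{\alpha,\beta}=0$ or $\deg p_{\alpha,\beta}<|\alpha+\beta|$. $A$ is quasi-commutative if $x_ir=c_{i,r}x_i$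 and $x_jx_i=c_{i,j}x_ix_j$ exactly. Standing assumptions: $R$ is left Gröbner soluble (left Noetherian; membership of $a$ in a left ideal $Rr_1+\dots+Rr_m$ is decidable, with coefficients computable; and finite generating sets of $\mathrm{Syz}_R[r_1\cdots r_m]=\{(b_1,\dots,b_m)\in R^m:\sum b_ir_i=0\}$ are computable). $\mathrm{Mon}(A)$ carries a monomial order, i.e. a total order $\succeq$ with: (a) $x^\beta\succeq x^\alpha\Rightarrow lm(x^\gamma x^\beta x^\lambda)\succeq lm(x^\gamma x^\alpha x^\lambda)$; (b) $x^\alpha\succeq1$; (c) $|\beta|\ge|\alpha|\Rightarrow x^\beta\succeq x^\alpha$. $A^m$ is the free left $A$-module of column vectors with canonical basis $\mathbf e_i$. A monomial of $A^m$ is $x^\alpha\mathbf e_i$, with $\mathrm{ind}=i$, $\exp=\alpha$, $\deg=|\alpha|$. The monomial $x^\alpha\mathbf e_i$ divides $x^\beta\mathbf e_j$ iff $i=j$ and $\beta_k\ge\alpha_k$ for all $k$. $\mathrm{Mon}(A^m)$ carries a monomial order, i.e. a total order with: (i) $lm(x^\beta x^\alpha)\mathbf e_i\succeq x^\alpha\mathbf e_i$; (ii) $x^\beta\mathbf e_j\succeq x^\alpha\mathbf e_i\Rightarrow lm(x^\gamma x^\beta)\mathbf e_j\succeq lm(x^\gamma x^\alpha)\mathbf e_i$; (iii) $\deg\mathbf X\ge\deg\mathbf Y\Rightarrow\mathbf X\succeq\mathbf Y$. Writing a nonzero $\mathbf f=c_1\mathbf X_1+\dots+c_t\mathbf X_t$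 with $c_i\in R\setminus\{0\}$ and $\mathbf X_1\succ\dots\succ\mathbf X_t$, set $lm(\mathbf f)=\mathbf X_1$, $lc(\mathbf f)=c_1$, $lt(\mathbf f)=c_1\mathbf X_1$. Also $lm(\mathbf 0)=\mathbf 0$, and $\mathbf X\succ\mathbf 0$ for every monomial $\mathbf X$. Reduction. Let $F$ be a finite set of nonzero vectors of $A^m$ and $\mathbf f,\mathbf h\in A^m$. We say $\mathbf f$ reduces to $\mathbf h$ by $F$ in one step, $\mathbf f\xrightarrow{F}\mathbf h$, if there are $\mathbf f_1,\dots,\mathbf f_t\in F$ and $r_1,\dots,r_t\in R$ with: (1) $lm(\mathbf f_i)\mid lm(\mathbf f)$, i.e. $\mathrm{ind}(lm\,\mathbf f_i)=\mathrm{ind}(lm\,\mathbf f)$ and $\alpha_i+\exp(lm\,\mathbf f_i)=\exp(lm\,\mathbf f)$ for some $\alpha_i\in\mathbb N^n$; (2) $lc(\mathbf f)=\sum_i r_i\sigma^{\alpha_i}(lc(\mathbf f_i))c_{\alpha_i,\exp(lm(\mathbf f_i))}$; (3) $\mathbf h=\mathbf f-\sum_i r_ix^{\alpha_i}\mathbf f_i$. By convention $\mathbf 0\xrightarrow{F}\mathbf 0$. We write $\mathbf f\xrightarrow{F}_+\mathbf h$ if there is a finite chain $\mathbf f\xrightarrow{F}\mathbf h_1\xrightarrow{F}\cdots\xrightarrow{F}\mathbf h$ of one-step reductions. *)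

theory Defs
  imports Main
begin

text \<open>Ring A is the ambient type 'a (ring_1); R is a subring; x i (i < n) are the
  variables x_1..x_n (indexed 0..n-1). Monomials of A^m are pairs (alpha, i) meaning x^alpha e_i.\<close>

definition exps :: "nat \<Rightarrow> (nat \<Rightarrow> nat) set" where
  "exps n = {\<alpha>. \<forall>i\<ge>n. \<alpha> i = 0}"

definition deg_exp :: "nat \<Rightarrow> (nat \<Rightarrow> nat) \<Rightarrow> nat" where
  "deg_exp n \<alpha> = (\<Sum>i<n. \<alpha> i)"

definition add_exp :: "(nat \<Rightarrow> nat) \<Rightarrow> (nat \<Rightarrow> nat) \<Rightarrow> (nat \<Rightarrow> nat)" where
  "add_exp \<alpha> \<beta> = (\<lambda>k. \<alpha> k + \<beta> k)"

definition unit_exp :: "nat \<Rightarrow> (nat \<Rightarrow> nat)" where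
  "unit_exp i = (\<lambda>k. if k = i then 1 else 0)"

definition xmon :: "(nat \<Rightarrow> 'a::ring_1) \<Rightarrow> nat \<Rightarrow> (nat \<Rightarrow> nat) \<Rightarrow> 'a" where
  "xmon x n \<alpha> = foldr (\<lambda>i acc. x i ^ \<alpha> i * acc) [0..<n] 1"

definition subring :: "'a::ring_1 set \<Rightarrow> bool" where
  "subring R \<longleftrightarrow> 0 \<in> R \<and> 1 \<in> R \<and> (\<forall>a\<in>R. \<forall>b\<in>R. a + b \<in> R \<and> a - b \<in> R \<and> a * b \<in> R)"

definition left_ideal :: "'a::ring_1 set \<Rightarrow> 'a set \<Rightarrow> bool" where
  "left_ideal R I \<longleftrightarrow> I \<subseteq> R \<and> 0 \<in> I \<and> (\<forall>a\<in>I. \<forall>b\<in>I. a + b \<in> I)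
     \<and> (\<forall>r\<in>R. \<forall>a\<in>I. r * a \<in> I)"

definition left_noetherian :: "'a::ring_1 set \<Rightarrow> bool" where
  "left_noetherian R \<longleftrightarrow> (\<forall>I. left_ideal R I \<longrightarrow>
     (\<exists>S. finite S \<and> S \<subseteq> I \<and> I = {\<Sum>s\<in>S. c s * s | c. \<forall>s. c s \<in> R}))"

definition unit_in :: "'a::ring_1 set \<Rightarrow> 'a \<Rightarrow> bool" where
  "unit_in R c \<longleftrightarrow> c \<in> R \<and> (\<exists>d\<in>R. d * c = 1 \<and> c * d = 1)"

definition is_rep :: "'a::ring_1 set \<Rightarrow> nat \<Rightarrow> ((nat \<Rightarrow> nat) \<Rightarrow> 'a) \<Rightarrow> bool" where
  "is_rep R n c \<longleftrightarrow> finite {\<alpha>. c \<alpha> \<noteq> 0} \<and> (\<forall>\<alpha>. c \<alpha> \<noteq> 0 \<longrightarrow> \<alpha> \<in> exps n \<and> c \<alpha> \<in> R)"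

definition rep_sum :: "(nat \<Rightarrow> 'a::ring_1) \<Rightarrow> nat \<Rightarrow> ((nat \<Rightarrow> nat) \<Rightarrow> 'a) \<Rightarrow> 'a" where
  "rep_sum x n c = (\<Sum>\<alpha>\<in>{\<alpha>. c \<alpha> \<noteq> 0}. c \<alpha> * xmon x n \<alpha>)"

definition sigma_PBW :: "'a::ring_1 set \<Rightarrow> (nat \<Rightarrow> 'a) \<Rightarrow> nat \<Rightarrow> bool" where
  "sigma_PBW R x n \<longleftrightarrow> subring R \<and> (\<forall>i<n. x i \<notin> R)
    \<and> (\<forall>a. \<exists>!c. is_rep R n c \<and> a = rep_sum x n c)
    \<and> (\<forall>i<n. \<forall>r\<in>R. r \<noteq> 0 \<longrightarrow> (\<exists>c\<in>R. c \<noteq> 0 \<and> x i * r - c * x i \<in> R))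
    \<and> (\<forall>i<n. \<forall>j<n. \<exists>c\<in>R. c \<noteq> 0 \<and>
         x j * x i - c * x i * x j \<in> {r0 + (\<Sum>k<n. rk k * x k) | r0 rk. r0 \<in> R \<and> (\<forall>k<n. rk k \<in> R)})"

definition quasi_comm :: "'a::ring_1 set \<Rightarrow> (nat \<Rightarrow> 'a) \<Rightarrow> nat \<Rightarrow> bool" where
  "quasi_comm R x n \<longleftrightarrow>
     (\<forall>i<n. \<forall>r\<in>R. r \<noteq> 0 \<longrightarrow> (\<exists>c\<in>R. c \<noteq> 0 \<and> x i * r = c * x i))
   \<and> (\<forall>i<n. \<forall>j<n. \<exists>c\<in>R. c \<noteq> 0 \<and> x j * x i = c * x i * x j)"

definition coeffs :: "'a::ring_1 set \<Rightarrow> (nat \<Rightarrow> 'a) \<Rightarrow> nat \<Rightarrow> 'a \<Rightarrow> (nat \<Rightarrow> nat) \<Rightarrow> 'a" where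
  "coeffs R x n a = (THE c. is_rep R n c \<and> a = rep_sum x n c)"

definition supp :: "'a::ring_1 set \<Rightarrow> (nat \<Rightarrow> 'a) \<Rightarrow> nat \<Rightarrow> 'a \<Rightarrow> (nat \<Rightarrow> nat) set" where
  "supp R x n a = {\<alpha>. coeffs R x n a \<alpha> \<noteq> 0}"

definition lmA :: "'a::ring_1 set \<Rightarrow> (nat \<Rightarrow> 'a) \<Rightarrow> nat \<Rightarrow> ((nat \<Rightarrow> nat) \<Rightarrow> (nat \<Rightarrow> nat) \<Rightarrow> bool)
     \<Rightarrow> 'a \<Rightarrow> (nat \<Rightarrow> nat)" where
  "lmA R x n le a = (THE \<alpha>. \<alpha> \<in> supp R x n a \<and> (\<forall>\<beta>\<in>supp R x n a. le \<beta> \<alpha>))"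

definition cab :: "'a::ring_1 set \<Rightarrow> (nat \<Rightarrow> 'a) \<Rightarrow> nat \<Rightarrow> (nat \<Rightarrow> nat) \<Rightarrow> (nat \<Rightarrow> nat) \<Rightarrow> 'a" where
  "cab R x n \<alpha> \<beta> = coeffs R x n (xmon x n \<alpha> * xmon x n \<beta>) (add_exp \<alpha> \<beta>)"

text \<open>sigma_i(r): the coefficient of x_i in x_i r = sigma_i(r) x_i + delta_i(r).\<close>
definition sigma :: "'a::ring_1 set \<Rightarrow> (nat \<Rightarrow> 'a) \<Rightarrow> nat \<Rightarrow> nat \<Rightarrow> 'a \<Rightarrow> 'a" where
  "sigma R x n i r = coeffs R x n (x i * r) (unit_exp i)"

definition sigma_pow :: "'a::ring_1 set \<Rightarrow> (nat \<Rightarrow> 'a) \<Rightarrow> nat \<Rightarrow> (nat \<Rightarrow> nat) \<Rightarrow> 'a \<Rightarrow> 'a" where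
  "sigma_pow R x n \<alpha> = foldr (\<lambda>i g. (sigma R x n i ^^ \<alpha> i) \<circ> g) [0..<n] id"

text \<open>Monomial order on Mon(A); le \<beta> \<alpha> means x^\<alpha> \<succeq> x^\<beta>.
  Degree compatibility (c) is read with strict degree inequality.\<close>
definition mon_order_A :: "'a::ring_1 set \<Rightarrow> (nat \<Rightarrow> 'a) \<Rightarrow> nat
     \<Rightarrow> ((nat \<Rightarrow> nat) \<Rightarrow> (nat \<Rightarrow> nat) \<Rightarrow> bool) \<Rightarrow> bool" where
  "mon_order_A R x n le \<longleftrightarrow>
     (\<forall>\<alpha>\<in>exps n. le \<alpha> \<alpha>)
   \<and> (\<forall>\<alpha>\<in>exps n. \<forall>\<beta>\<in>exps n. le \<alpha> \<beta> \<and> le \<beta> \<alpha> \<longrightarrow> \<alpha> = \<beta>)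
   \<and> (\<forall>\<alpha>\<in>exps n. \<forall>\<beta>\<in>exps n. \<forall>\<gamma>\<in>exps n. le \<alpha> \<beta> \<and> le \<beta> \<gamma> \<longrightarrow> le \<alpha> \<gamma>)
   \<and> (\<forall>\<alpha>\<in>exps n. \<forall>\<beta>\<in>exps n. le \<alpha> \<beta> \<or> le \<beta> \<alpha>)
   \<and> (\<forall>\<alpha>\<in>exps n. \<forall>\<beta>\<in>exps n. \<forall>\<gamma>\<in>exps n. \<forall>\<mu>\<in>exps n. le \<alpha> \<beta> \<longrightarrow>
        le (lmA R x n le (xmon x n \<gamma> * xmon x n \<alpha> * xmon x n \<mu>))
           (lmA R x n le (xmon x n \<gamma> * xmon x n \<beta> * xmon x n \<mu>)))
   \<and> (\<forall>\<alpha>\<in>exps n. le (\<lambda>_. 0) \<alpha>)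
   \<and> (\<forall>\<alpha>\<in>exps n. \<forall>\<beta>\<in>exps n. deg_exp n \<alpha> < deg_exp n \<beta> \<longrightarrow> le \<alpha> \<beta>)"

text \<open>Monomial order on Mon(A^m); leM Y X means X \<succeq> Y, monomials (alpha, i) with i < m.\<close>
definition mon_order_M :: "'a::ring_1 set \<Rightarrow> (nat \<Rightarrow> 'a) \<Rightarrow> nat \<Rightarrow> nat
     \<Rightarrow> ((nat \<Rightarrow> nat) \<Rightarrow> (nat \<Rightarrow> nat) \<Rightarrow> bool)
     \<Rightarrow> ((nat \<Rightarrow> nat) \<times> nat \<Rightarrow> (nat \<Rightarrow> nat) \<times> nat \<Rightarrow> bool) \<Rightarrow> bool" where
  "mon_order_M R x n m le leM \<longleftrightarrow>
     (let M = exps n \<times> {..<m} in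
       (\<forall>X\<in>M. leM X X)
     \<and> (\<forall>X\<in>M. \<forall>Y\<in>M. leM X Y \<and> leM Y X \<longrightarrow> X = Y)
     \<and> (\<forall>X\<in>M. \<forall>Y\<in>M. \<forall>Z\<in>M. leM X Y \<and> leM Y Z \<longrightarrow> leM X Z)
     \<and> (\<forall>X\<in>M. \<forall>Y\<in>M. leM X Y \<or> leM Y X)
     \<and> (\<forall>\<alpha>\<in>exps n. \<forall>\<beta>\<in>exps n. \<forall>i<m.
          leM (\<alpha>, i) (lmA R x n le (xmon x n \<beta> * xmon x n \<alpha>), i))
     \<and> (\<forall>\<alpha>\<in>exps n. \<forall>\<beta>\<in>exps n. \<forall>\<gamma>\<in>exps n. \<forall>i<m. \<forall>j<m. leM (\<alpha>, i) (\<beta>, j) \<longrightarrow>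
          leM (lmA R x n le (xmon x n \<gamma> * xmon x n \<alpha>), i) (lmA R x n le (xmon x n \<gamma> * xmon x n \<beta>), j))
     \<and> (\<forall>\<alpha>\<in>exps n. \<forall>\<beta>\<in>exps n. \<forall>i<m. \<forall>j<m.
          deg_exp n \<alpha> < deg_exp n \<beta> \<longrightarrow> leM (\<alpha>, i) (\<beta>, j)))"

definition vec_in :: "nat \<Rightarrow> (nat \<Rightarrow> 'a::ring_1) \<Rightarrow> bool" where
  "vec_in m f \<longleftrightarrow> (\<forall>i\<ge>m. f i = 0)"

definition vsupp :: "'a::ring_1 set \<Rightarrow> (nat \<Rightarrow> 'a) \<Rightarrow> nat \<Rightarrow> nat \<Rightarrow> (nat \<Rightarrow> 'a)
     \<Rightarrow> ((nat \<Rightarrow> nat) \<times> nat) set" where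
  "vsupp R x n m f = {(\<alpha>, i). i < m \<and> \<alpha> \<in> supp R x n (f i)}"

text \<open>Leading monomial of a vector; None stands for lm(0) = 0.\<close>
definition lmv :: "'a::ring_1 set \<Rightarrow> (nat \<Rightarrow> 'a) \<Rightarrow> nat \<Rightarrow> nat
     \<Rightarrow> ((nat \<Rightarrow> nat) \<times> nat \<Rightarrow> (nat \<Rightarrow> nat) \<times> nat \<Rightarrow> bool) \<Rightarrow> (nat \<Rightarrow> 'a)
     \<Rightarrow> ((nat \<Rightarrow> nat) \<times> nat) option" where
  "lmv R x n m leM f = (if vsupp R x n m f = {} then None
      else Some (THE X. X \<in> vsupp R x n m f \<and> (\<forall>Y\<in>vsupp R x n m f. leM Y X)))"

definition lcv :: "'a::ring_1 set \<Rightarrow> (nat \<Rightarrow> 'a) \<Rightarrow> nat \<Rightarrow> nat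
     \<Rightarrow> ((nat \<Rightarrow> nat) \<times> nat \<Rightarrow> (nat \<Rightarrow> nat) \<times> nat \<Rightarrow> bool) \<Rightarrow> (nat \<Rightarrow> 'a) \<Rightarrow> 'a" where
  "lcv R x n m leM f = (case lmv R x n m leM f of None \<Rightarrow> 0
      | Some (\<alpha>, i) \<Rightarrow> coeffs R x n (f i) \<alpha>)"

fun mgt :: "('m \<Rightarrow> 'm \<Rightarrow> bool) \<Rightarrow> 'm option \<Rightarrow> 'm option \<Rightarrow> bool" where
  "mgt leM (Some X) None = True"
| "mgt leM (Some X) (Some Y) = (leM Y X \<and> X \<noteq> Y)"
| "mgt leM None _ = False"

definition xv :: "(nat \<Rightarrow> 'a::ring_1) \<Rightarrow> nat \<Rightarrow> (nat \<Rightarrow> nat) \<Rightarrow> (nat \<Rightarrow> 'a) \<Rightarrow> (nat \<Rightarrow> 'a)" where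
  "xv x n \<theta> f = (\<lambda>i. xmon x n \<theta> * f i)"

definition red1 :: "'a::ring_1 set \<Rightarrow> (nat \<Rightarrow> 'a) \<Rightarrow> nat \<Rightarrow> nat
     \<Rightarrow> ((nat \<Rightarrow> nat) \<times> nat \<Rightarrow> (nat \<Rightarrow> nat) \<times> nat \<Rightarrow> bool) \<Rightarrow> (nat \<Rightarrow> 'a) set
     \<Rightarrow> (nat \<Rightarrow> 'a) \<Rightarrow> (nat \<Rightarrow> 'a) \<Rightarrow> bool" where
  "red1 R x n m leM F f h \<longleftrightarrow>
     (f = (\<lambda>_. 0) \<and> h = (\<lambda>_. 0))
   \<or> (f \<noteq> (\<lambda>_. 0) \<and> (\<exists>(t::nat) g r a.
        (\<forall>k<t. g k \<in> F \<and> r k \<in> R \<and> a k \<in> exps n \<and>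
           (case (lmv R x n m leM f, lmv R x n m leM (g k)) of
              (Some (\<beta>, i), Some (\<gamma>, j)) \<Rightarrow> j = i \<and> add_exp (a k) \<gamma> = \<beta>
            | _ \<Rightarrow> False))
      \<and> lcv R x n m leM f = (\<Sum>k<t. r k * sigma_pow R x n (a k) (lcv R x n m leM (g k))
                                      * cab R x n (a k) (fst (the (lmv R x n m leM (g k)))))
      \<and> h = (\<lambda>i. f i - (\<Sum>k<t. r k * xmon x n (a k) * g k i))))"

definition redp :: "'a::ring_1 set \<Rightarrow> (nat \<Rightarrow> 'a) \<Rightarrow> nat \<Rightarrow> nat
     \<Rightarrow> ((nat \<Rightarrow> nat) \<times> nat \<Rightarrow> (nat \<Rightarrow> nat) \<times> nat \<Rightarrow> bool) \<Rightarrow> (nat \<Rightarrow> 'a) set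
     \<Rightarrow> (nat \<Rightarrow> 'a) \<Rightarrow> (nat \<Rightarrow> 'a) \<Rightarrow> bool" where
  "redp R x n m leM F = tranclp (red1 R x n m leM F)"

end

theory Submission
  imports Defs
begin

locale PBW =
  fixes R :: "'a::ring_1 set" and x :: "nat \<Rightarrow> 'a" and n :: nat
  assumes pbw: "sigma_PBW R x n"
begin

abbreviation "co \<equiv> coeffs R x n"
abbreviation "X \<equiv> xmon x n"
abbreviation "deg \<equiv> deg_exp n"

lemma subR: "subring R" using pbw unfolding sigma_PBW_def by blast
lemma R0[simp]: "0 \<in> R" using subR unfolding subring_def by blast
lemma R1[simp]: "1 \<in> R" using subR unfolding subring_def by blast
lemma Radd[intro]: "a \<in> R \<Longrightarrow> b \<in> R \<Longrightarrow> a + b \<in> R" using subR unfolding subring_def by blast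
lemma Rdiff[intro]: "a \<in> R \<Longrightarrow> b \<in> R \<Longrightarrow> a - b \<in> R" using subR unfolding subring_def by blast
lemma Rmult[intro]: "a \<in> R \<Longrightarrow> b \<in> R \<Longrightarrow> a * b \<in> R" using subR unfolding subring_def by blast
lemma Rneg[intro]: "a \<in> R \<Longrightarrow> - a \<in> R" using Rdiff[of 0 a] by simp
lemma Rsum[intro]: "(\<And>i. i \<in> I \<Longrightarrow> f i \<in> R) \<Longrightarrow> sum f I \<in> R"
  by (induction I rule: infinite_finite_induct) auto

lemma uniq: "\<exists>!c. is_rep R n c \<and> a = rep_sum x n c"
proof -
  from pbw have "\<forall>a. \<exists>!c. is_rep R n c \<and> a = rep_sum x n c"
    unfolding sigma_PBW_def by (elim conjE) assumption
  thus ?thesis by (rule spec)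
qed

lemma ax2: "i < n \<Longrightarrow> r \<in> R \<Longrightarrow> r \<noteq> 0 \<Longrightarrow> \<exists>c\<in>R. c \<noteq> 0 \<and> x i * r - c * x i \<in> R"
proof -
  assume a: "i < n" "r \<in> R" "r \<noteq> 0"
  from pbw have "\<forall>i<n. \<forall>r\<in>R. r \<noteq> 0 \<longrightarrow> (\<exists>c\<in>R. c \<noteq> 0 \<and> x i * r - c * x i \<in> R)"
    unfolding sigma_PBW_def by (elim conjE) assumption
  thus ?thesis using a by blast
qed

lemma ax3: "i < n \<Longrightarrow> j < n \<Longrightarrow> \<exists>c\<in>R. c \<noteq> 0 \<and>
         x j * x i - c * x i * x j \<in> {r0 + (\<Sum>k<n. rk k * x k) | r0 rk. r0 \<in> R \<and> (\<forall>k<n. rk k \<in> R)}"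
proof -
  assume a: "i < n" "j < n"
  from pbw have "\<forall>i<n. \<forall>j<n. \<exists>c\<in>R. c \<noteq> 0 \<and>
         x j * x i - c * x i * x j \<in> {r0 + (\<Sum>k<n. rk k * x k) | r0 rk. r0 \<in> R \<and> (\<forall>k<n. rk k \<in> R)}"
    unfolding sigma_PBW_def by (elim conjE) assumption
  thus ?thesis using a by blast
qed

lemma co_spec: "is_rep R n (co a) \<and> a = rep_sum x n (co a)"
  unfolding coeffs_def using theI'[OF uniq] .

lemma co_eq: "is_rep R n c \<Longrightarrow> a = rep_sum x n c \<Longrightarrow> co a = c"
  unfolding coeffs_def by (intro the1_equality[OF uniq]) simp

lemma co_R[simp,intro]: "co a \<alpha> \<in> R"
  using co_spec[of a] unfolding is_rep_def by (cases "co a \<alpha> = 0") auto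

lemma co_exps: "co a \<alpha> \<noteq> 0 \<Longrightarrow> \<alpha> \<in> exps n"
  using co_spec[of a] unfolding is_rep_def by auto

lemma co_nexps: "\<alpha> \<notin> exps n \<Longrightarrow> co a \<alpha> = 0"
  using co_exps by blast

lemma co_fin[simp]: "finite {\<alpha>. co a \<alpha> \<noteq> 0}"
  using co_spec[of a] unfolding is_rep_def by auto

lemma expand: "a = (\<Sum>\<alpha>\<in>{\<alpha>. co a \<alpha> \<noteq> 0}. co a \<alpha> * X \<alpha>)"
  using co_spec[of a] unfolding rep_sum_def by simp

lemma rep_sum_super: "finite S \<Longrightarrow> {\<alpha>. c \<alpha> \<noteq> 0} \<subseteq> S \<Longrightarrow>
   rep_sum x n c = (\<Sum>\<alpha>\<in>S. c \<alpha> * X \<alpha>)"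
  unfolding rep_sum_def by (rule sum.mono_neutral_left) auto

lemma co_add: "co (a + b) = (\<lambda>\<alpha>. co a \<alpha> + co b \<alpha>)"
proof (rule co_eq)
  let ?S = "{\<alpha>. co a \<alpha> \<noteq> 0} \<union> {\<alpha>. co b \<alpha> \<noteq> 0}"
  have fS: "finite ?S" by simp
  show "is_rep R n (\<lambda>\<alpha>. co a \<alpha> + co b \<alpha>)"
    unfolding is_rep_def
    by (auto intro: finite_subset[OF _ fS]) (rule ccontr, simp add: co_nexps)
  have "rep_sum x n (\<lambda>\<alpha>. co a \<alpha> + co b \<alpha>) = (\<Sum>\<alpha>\<in>?S. (co a \<alpha> + co b \<alpha>) * X \<alpha>)"
    by (rule rep_sum_super) auto
  also have "\<dots> = (\<Sum>\<alpha>\<in>?S. co a \<alpha> * X \<alpha>) + (\<Sum>\<alpha>\<in>?S. co b \<alpha> * X \<alpha>)"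
    by (simp add: distrib_right sum.distrib)
  also have "(\<Sum>\<alpha>\<in>?S. co a \<alpha> * X \<alpha>) = a"
    using co_spec[of a] rep_sum_super[of ?S "co a"] by auto
  also have "(\<Sum>\<alpha>\<in>?S. co b \<alpha> * X \<alpha>) = b"
    using co_spec[of b] rep_sum_super[of ?S "co b"] by auto
  finally show "a + b = rep_sum x n (\<lambda>\<alpha>. co a \<alpha> + co b \<alpha>)" by simp
qed

lemma co_smul: "r \<in> R \<Longrightarrow> co (r * a) = (\<lambda>\<alpha>. r * co a \<alpha>)"
proof (rule co_eq)
  assume r: "r \<in> R"
  let ?S = "{\<alpha>. co a \<alpha> \<noteq> 0}"
  show "is_rep R n (\<lambda>\<alpha>. r * co a \<alpha>)"
    unfolding is_rep_def using r
    by (auto intro: finite_subset[OF _ co_fin[of a]]) (rule ccontr, simp add: co_nexps)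
  have "rep_sum x n (\<lambda>\<alpha>. r * co a \<alpha>) = (\<Sum>\<alpha>\<in>?S. (r * co a \<alpha>) * X \<alpha>)"
    by (rule rep_sum_super) auto
  also have "\<dots> = r * a"
    by (subst (2) expand) (simp add: sum_distrib_left mult.assoc)
  finally show "r * a = rep_sum x n (\<lambda>\<alpha>. r * co a \<alpha>)" by simp
qed

lemma co_zero[simp]: "co 0 = (\<lambda>_. 0)"
  by (rule co_eq) (auto simp: is_rep_def rep_sum_def)

lemma co_neg: "co (- a) = (\<lambda>\<alpha>. - co a \<alpha>)"
proof -
  have "co ((-1) * a) = (\<lambda>\<alpha>. (-1) * co a \<alpha>)" by (rule co_smul) auto
  thus ?thesis by simp
qed

lemma co_diff: "co (a - b) = (\<lambda>\<alpha>. co a \<alpha> - co b \<alpha>)"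
  using co_add[of a "-b"] co_neg[of b] by simp

lemma co_sum: "co (\<Sum>i\<in>I. f i) = (\<lambda>\<alpha>. \<Sum>i\<in>I. co (f i) \<alpha>)"
  by (induction I rule: infinite_finite_induct) (auto simp: co_add)

lemma co_mon: "c \<in> R \<Longrightarrow> \<alpha> \<in> exps n \<Longrightarrow> co (c * X \<alpha>) = (\<lambda>\<beta>. if \<beta> = \<alpha> then c else 0)"
proof (rule co_eq)
  assume "c \<in> R" "\<alpha> \<in> exps n"
  thus "is_rep R n (\<lambda>\<beta>. if \<beta> = \<alpha> then c else 0)"
    unfolding is_rep_def by (auto intro: finite_subset[of _ "{\<alpha>}"])
  have "rep_sum x n (\<lambda>\<beta>. if \<beta> = \<alpha> then c else 0) = (\<Sum>\<beta>\<in>{\<alpha>}. (if \<beta> = \<alpha> then c else 0) * X \<beta>)"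
    by (rule rep_sum_super) auto
  thus "c * X \<alpha> = rep_sum x n (\<lambda>\<beta>. if \<beta> = \<alpha> then c else 0)" by simp
qed

lemma co_zero_iff: "co a = (\<lambda>_. 0) \<Longrightarrow> a = 0"
  by (subst expand) simp

end

context PBW begin

definition V where "V d = {a. \<forall>\<alpha>. co a \<alpha> \<noteq> 0 \<longrightarrow> deg \<alpha> \<le> d}"
definition W where "W d = {a. \<forall>\<alpha>. co a \<alpha> \<noteq> 0 \<longrightarrow> deg \<alpha> < d}"

lemma V_0[simp]: "0 \<in> V d" by (simp add: V_def)
lemma W_0[simp]: "0 \<in> W d" by (simp add: W_def)
lemma V_add[intro]: "a \<in> V d \<Longrightarrow> b \<in> V d \<Longrightarrow> a + b \<in> V d"
  by (auto simp: V_def co_add) (metis add_0)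
lemma W_add[intro]: "a \<in> W d \<Longrightarrow> b \<in> W d \<Longrightarrow> a + b \<in> W d"
  by (auto simp: W_def co_add) (metis add_0)
lemma V_diff[intro]: "a \<in> V d \<Longrightarrow> b \<in> V d \<Longrightarrow> a - b \<in> V d"
  by (auto simp: V_def co_diff) (metis diff_self diff_0_right)
lemma W_diff[intro]: "a \<in> W d \<Longrightarrow> b \<in> W d \<Longrightarrow> a - b \<in> W d"
  by (auto simp: W_def co_diff) (metis diff_self diff_0_right)
lemma V_smul[intro]: "r \<in> R \<Longrightarrow> a \<in> V d \<Longrightarrow> r * a \<in> V d"
  by (auto simp: V_def co_smul) (metis mult_zero_right)
lemma W_smul[intro]: "r \<in> R \<Longrightarrow> a \<in> W d \<Longrightarrow> r * a \<in> W d"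
  by (auto simp: W_def co_smul) (metis mult_zero_right)
lemma V_sum[intro]: "(\<And>i. i \<in> I \<Longrightarrow> f i \<in> V d) \<Longrightarrow> sum f I \<in> V d"
  by (induction I rule: infinite_finite_induct) auto
lemma W_sum[intro]: "(\<And>i. i \<in> I \<Longrightarrow> f i \<in> W d) \<Longrightarrow> sum f I \<in> W d"
  by (induction I rule: infinite_finite_induct) auto
lemma V_mono: "a \<in> V d \<Longrightarrow> d \<le> e \<Longrightarrow> a \<in> V e"
  by (auto simp: V_def)
lemma W_mono: "a \<in> W d \<Longrightarrow> d \<le> e \<Longrightarrow> a \<in> W e"
  by (fastforce simp: W_def)
lemma V_mon: "c \<in> R \<Longrightarrow> \<alpha> \<in> exps n \<Longrightarrow> deg \<alpha> \<le> d \<Longrightarrow> c * X \<alpha> \<in> V d"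
  by (auto simp: V_def co_mon)
lemma W_Suc: "W (Suc d) = V d" by (auto simp: V_def W_def less_Suc_eq_le)
lemma W_zero: "a \<in> W 0 \<Longrightarrow> a = 0"
  by (rule co_zero_iff) (auto simp: W_def)
lemma W_V: "a \<in> W d \<Longrightarrow> a \<in> V d" by (fastforce simp: W_def V_def)
lemma V_W: "a \<in> V d \<Longrightarrow> d < e \<Longrightarrow> a \<in> W e" by (fastforce simp: W_def V_def)
lemma W_coeff: "a \<in> W d \<Longrightarrow> d \<le> deg \<alpha> \<Longrightarrow> co a \<alpha> = 0"
  by (fastforce simp: W_def)

lemma zero_exps[simp]: "(\<lambda>_. 0) \<in> exps n" by (simp add: exps_def)
lemma exps_lt: "\<alpha> j \<noteq> 0 \<Longrightarrow> \<alpha> \<in> exps n \<Longrightarrow> j < n"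
proof -
  assume "\<alpha> j \<noteq> 0" "\<alpha> \<in> exps n"
  moreover have "\<forall>i\<ge>n. \<alpha> i = 0" using \<open>\<alpha> \<in> exps n\<close> by (simp add: exps_def)
  ultimately show "j < n" by (metis leI)
qed
lemma exps_upd: "\<alpha> \<in> exps n \<Longrightarrow> j < n \<Longrightarrow> \<alpha>(j := v) \<in> exps n"
  by (simp add: exps_def)
lemma add_exps: "\<alpha> \<in> exps n \<Longrightarrow> \<beta> \<in> exps n \<Longrightarrow> add_exp \<alpha> \<beta> \<in> exps n"
  by (simp add: exps_def add_exp_def)
lemma deg_upd: "j < n \<Longrightarrow> deg (\<alpha>(j := v)) + \<alpha> j = deg \<alpha> + v"
proof -
  assume j: "j < n"
  have "deg (\<alpha>(j := v)) = v + (\<Sum>i\<in>{..<n} - {j}. \<alpha> i)"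
    unfolding deg_exp_def using j by (subst sum.remove[of _ j]) auto
  moreover have "deg \<alpha> = \<alpha> j + (\<Sum>i\<in>{..<n} - {j}. \<alpha> i)"
    unfolding deg_exp_def using j by (subst sum.remove[of _ j]) auto
  ultimately show ?thesis by simp
qed
lemma deg_Suc: "j < n \<Longrightarrow> deg (\<alpha>(j := Suc (\<alpha> j))) = Suc (deg \<alpha>)"
  using deg_upd[of j \<alpha> "Suc (\<alpha> j)"] by simp
lemma deg_add: "deg (add_exp \<alpha> \<beta>) = deg \<alpha> + deg \<beta>"
  by (simp add: deg_exp_def add_exp_def sum.distrib)
lemma deg_zero: "\<alpha> \<in> exps n \<Longrightarrow> deg \<alpha> = 0 \<Longrightarrow> \<alpha> = (\<lambda>_. 0)"
  by (rule ext) (auto simp: deg_exp_def exps_def not_less[symmetric])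
lemma deg_zero'[simp]: "deg (\<lambda>_. 0) = 0" by (simp add: deg_exp_def)

lemma fold0: "(\<forall>i\<in>set l. \<alpha> i = 0) \<Longrightarrow> foldr (\<lambda>i acc. x i ^ \<alpha> i * acc) l a = a"
  by (induction l) auto
lemma sfold0: "(\<forall>i\<in>set l. \<alpha> i = 0) \<Longrightarrow> foldr (\<lambda>i g. (sigma R x n i ^^ \<alpha> i) \<circ> g) l h = h"
  by (induction l) auto

lemma split_upt: "j < n \<Longrightarrow> [0..<n] = [0..<j] @ j # [Suc j..<n]"
  using upt_add_eq_append[of 0 j "n - j"] upt_conv_Cons[of j n] by simp

lemma X_zero[simp]: "X (\<lambda>_. 0) = 1" unfolding xmon_def by (rule fold0) simp
lemma S_zero[simp]: "sigma_pow R x n (\<lambda>_. 0) = id" unfolding sigma_pow_def by (rule sfold0) simp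

lemma X_front: "j < n \<Longrightarrow> \<forall>k<j. \<alpha> k = 0 \<Longrightarrow> x j * X \<alpha> = X (\<alpha>(j := Suc (\<alpha> j)))"
proof -
  assume j: "j < n" and z: "\<forall>k<j. \<alpha> k = 0"
  let ?\<beta> = "\<alpha>(j := Suc (\<alpha> j))"
  have t: "foldr (\<lambda>i acc. x i ^ \<alpha> i * acc) [Suc j..<n] 1 = foldr (\<lambda>i acc. x i ^ ?\<beta> i * acc) [Suc j..<n] 1"
    by (rule foldr_cong) auto
  show ?thesis unfolding xmon_def split_upt[OF j]
    using z t by (simp add: fold0 mult.assoc)
qed

lemma S_front: "j < n \<Longrightarrow> \<forall>k<j. \<alpha> k = 0 \<Longrightarrow>
   sigma_pow R x n (\<alpha>(j := Suc (\<alpha> j))) = sigma R x n j \<circ> sigma_pow R x n \<alpha>"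
proof -
  assume j: "j < n" and z: "\<forall>k<j. \<alpha> k = 0"
  let ?\<beta> = "\<alpha>(j := Suc (\<alpha> j))"
  have t: "foldr (\<lambda>i g. (sigma R x n i ^^ \<alpha> i) \<circ> g) [Suc j..<n] id = foldr (\<lambda>i g. (sigma R x n i ^^ ?\<beta> i) \<circ> g) [Suc j..<n] id"
    by (rule foldr_cong) auto
  show ?thesis unfolding sigma_pow_def split_upt[OF j]
    using z t by (simp add: sfold0 o_assoc)
qed

lemma exps_induct[consumes 1, case_names zero step]:
  assumes "\<alpha> \<in> exps n" and "P (\<lambda>_. 0)"
    and "\<And>\<alpha> j. \<alpha> \<in> exps n \<Longrightarrow> j < n \<Longrightarrow> \<forall>k<j. \<alpha> k = 0 \<Longrightarrow> P \<alpha> \<Longrightarrow> P (\<alpha>(j := Suc (\<alpha> j)))"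
  shows "P \<alpha>"
proof -
  have "\<forall>\<alpha>. \<alpha> \<in> exps n \<longrightarrow> deg \<alpha> = d \<longrightarrow> P \<alpha>" for d
  proof (induction d)
    case 0 then show ?case using assms(2) deg_zero by auto
  next
    case (Suc d)
    show ?case
    proof (intro allI impI)
      fix \<alpha> assume a: "\<alpha> \<in> exps n" "deg \<alpha> = Suc d"
      have "\<alpha> \<noteq> (\<lambda>_. 0)" using a by auto
      then obtain k where k: "\<alpha> k \<noteq> 0" by auto
      define j where "j = (LEAST k. \<alpha> k \<noteq> 0)"
      have aj: "\<alpha> j \<noteq> 0" using LeastI[of "\<lambda>k. \<alpha> k \<noteq> 0", OF k] j_def by simp
      have jn: "j < n" using aj a(1) by (rule exps_lt)
      have z: "\<forall>k<j. \<alpha> k = 0" using not_less_Least j_def by blast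
      define \<alpha>' where "\<alpha>' = \<alpha>(j := \<alpha> j - 1)"
      have e: "\<alpha> = \<alpha>'(j := Suc (\<alpha>' j))" using aj unfolding \<alpha>'_def by auto
      have a': "\<alpha>' \<in> exps n" using exps_upd[OF a(1) jn] \<alpha>'_def by simp
      have z': "\<forall>k<j. \<alpha>' k = 0" using z \<alpha>'_def by simp
      have "deg \<alpha>' = d" using deg_Suc[OF jn, of \<alpha>'] e a(2) by simp
      hence "P \<alpha>'" using Suc a' by blast
      thus "P \<alpha>" using assms(3)[OF a' jn z'] e by simp
    qed
  qed
  thus ?thesis using assms(1) by blast
qed

definition ue :: "nat \<Rightarrow> nat \<Rightarrow> nat" where "ue i = (\<lambda>_. 0)(i := Suc 0)"
lemma ue_unit: "unit_exp i = ue i" by (auto simp: unit_exp_def ue_def)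
lemma ue_exps: "i < n \<Longrightarrow> ue i \<in> exps n" by (simp add: ue_def exps_upd)
lemma deg_ue: "i < n \<Longrightarrow> deg (ue i) = 1" using deg_Suc[of i "\<lambda>_. 0"] by (simp add: ue_def)
lemma X_ue: "i < n \<Longrightarrow> X (ue i) = x i"
  using X_front[of i "\<lambda>_. 0"] by (simp add: ue_def)
lemma ue_ne: "ue i \<noteq> (\<lambda>_. 0)" by (auto simp: ue_def fun_eq_iff)

lemma sig_prop: assumes i: "i < n" and s: "s \<in> R"
  shows "sigma R x n i s \<in> R \<and> x i * s - sigma R x n i s * x i \<in> R \<and> (s \<noteq> 0 \<longrightarrow> sigma R x n i s \<noteq> 0)"
proof (cases "s = 0")
  case True then show ?thesis by (simp add: sigma_def)
next
  case False
  then obtain c where c: "c \<in> R" "c \<noteq> 0" "x i * s - c * x i \<in> R"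
    using ax2[OF i s False] by blast
  define r0 where "r0 = x i * s - c * x i"
  have eq: "x i * s = c * X (ue i) + r0 * X (\<lambda>_. 0)" using X_ue[OF i] r0_def by simp
  have "sigma R x n i s = c"
    unfolding sigma_def ue_unit eq co_add
    using c r0_def co_mon[OF c(1) ue_exps[OF i]] co_mon[of r0 "\<lambda>_. 0"] ue_ne[of i] by simp
  thus ?thesis using c False by simp
qed

end

context PBW begin

lemma sig_eq: "i < n \<Longrightarrow> s \<in> R \<Longrightarrow> \<exists>r1\<in>R. x i * s = sigma R x n i s * x i + r1"
proof -
  assume a: "i < n" "s \<in> R"
  have "x i * s - sigma R x n i s * x i \<in> R" using sig_prop[OF a] by blast
  moreover have "x i * s = sigma R x n i s * x i + (x i * s - sigma R x n i s * x i)" by simp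
  ultimately show ?thesis by blast
qed

lemma sigR: "i < n \<Longrightarrow> s \<in> R \<Longrightarrow> sigma R x n i s \<in> R" using sig_prop by blast

definition Tst where "Tst d \<longleftrightarrow> (\<forall>i<n. \<forall>\<beta>\<in>exps n. deg \<beta> = d \<longrightarrow>
   (\<exists>c\<in>R. x i * X \<beta> - c * X (\<beta>(i := Suc (\<beta> i))) \<in> V d))"
definition Ust where "Ust d \<longleftrightarrow> (\<forall>j<n. \<forall>a\<in>V d. x j * a \<in> V (Suc d))"

lemma X_V: "\<alpha> \<in> exps n \<Longrightarrow> X \<alpha> \<in> V (deg \<alpha>)"
  using V_mon[of 1 \<alpha> "deg \<alpha>"] by simp

lemma V_coeff: "a \<in> V d \<Longrightarrow> co a \<gamma> \<noteq> 0 \<Longrightarrow> deg \<gamma> \<le> d" by (auto simp: V_def)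

lemma U_from_T: assumes T: "\<forall>e\<le>d. Tst e" shows "Ust d"
  unfolding Ust_def
proof (intro allI impI ballI)
  fix j a assume j: "j < n" and a: "a \<in> V d"
  let ?S = "{\<gamma>. co a \<gamma> \<noteq> 0}"
  have eq: "x j * a = (\<Sum>\<gamma>\<in>?S. x j * (co a \<gamma> * X \<gamma>))"
    by (subst expand) (simp add: sum_distrib_left)
  have "x j * (co a \<gamma> * X \<gamma>) \<in> V (Suc d)" if g: "\<gamma> \<in> ?S" for \<gamma>
  proof -
    have ge: "\<gamma> \<in> exps n" using g co_exps by blast
    have gd: "deg \<gamma> \<le> d" using a g V_coeff by blast
    obtain r1 where r1: "r1 \<in> R" "x j * co a \<gamma> = sigma R x n j (co a \<gamma>) * x j + r1"
      using sig_eq[OF j co_R] by blast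
    obtain c where c: "c \<in> R" "x j * X \<gamma> - c * X (\<gamma>(j := Suc (\<gamma> j))) \<in> V (deg \<gamma>)"
      using T gd j ge unfolding Tst_def by blast
    have "c * X (\<gamma>(j := Suc (\<gamma> j))) \<in> V (Suc d)"
      using V_mon[OF c(1) exps_upd[OF ge j]] deg_Suc[OF j] gd by simp
    moreover have "x j * X \<gamma> - c * X (\<gamma>(j := Suc (\<gamma> j))) \<in> V (Suc d)"
      using V_mono[OF c(2)] gd by simp
    ultimately have xj: "x j * X \<gamma> \<in> V (Suc d)" using V_add by fastforce
    have "x j * (co a \<gamma> * X \<gamma>) = sigma R x n j (co a \<gamma>) * (x j * X \<gamma>) + r1 * X \<gamma>"
      by (simp add: mult.assoc[symmetric] r1(2) distrib_right)
    moreover have "r1 * X \<gamma> \<in> V (Suc d)" using V_mon[OF r1(1) ge] gd by simp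
    moreover have "sigma R x n j (co a \<gamma>) * (x j * X \<gamma>) \<in> V (Suc d)"
      using V_smul[OF sigR[OF j co_R] xj] .
    ultimately show ?thesis using V_add by simp
  qed
  thus "x j * a \<in> V (Suc d)" unfolding eq by blast
qed

lemma T_all: "Tst d"
proof (induction d rule: less_induct)
  case (less d)
  show ?case unfolding Tst_def
  proof (intro allI impI ballI)
    fix i \<beta> assume i: "i < n" and be: "\<beta> \<in> exps n" and bd: "deg \<beta> = d"
    show "\<exists>c\<in>R. x i * X \<beta> - c * X (\<beta>(i := Suc (\<beta> i))) \<in> V d"
    proof (cases "\<forall>k<i. \<beta> k = 0")
      case True
      then show ?thesis using X_front[OF i True] by (intro bexI[of _ 1]) auto
    next
      case False
      then obtain k where k: "k < i" "\<beta> k \<noteq> 0" by blast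
      define j where "j = (LEAST k. \<beta> k \<noteq> 0)"
      have bj: "\<beta> j \<noteq> 0" using LeastI[of "\<lambda>k. \<beta> k \<noteq> 0", OF k(2)] j_def by simp
      have jk: "j \<le> k" using Least_le[of "\<lambda>k. \<beta> k \<noteq> 0", OF k(2)] j_def by simp
      hence ji: "j < i" using k by simp
      have jn: "j < n" using ji i by simp
      have z: "\<forall>k<j. \<beta> k = 0" using not_less_Least j_def by blast
      define \<beta>' where "\<beta>' = \<beta>(j := \<beta> j - 1)"
      have beq: "\<beta> = \<beta>'(j := Suc (\<beta>' j))" using bj unfolding \<beta>'_def by auto
      have be': "\<beta>' \<in> exps n" using exps_upd[OF be jn] \<beta>'_def by simp
      have z': "\<forall>k<j. \<beta>' k = 0" using z \<beta>'_def by simp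
      obtain d' where dd: "d = Suc d'" "deg \<beta>' = d'"
        using deg_Suc[OF jn, of \<beta>'] beq bd by auto
      have Xb: "X \<beta> = x j * X \<beta>'" using X_front[OF jn z'] beq by simp
      have Td': "Tst d'" using less dd by simp
      have Ud': "Ust d'" using U_from_T less dd by simp
      obtain c where c: "c \<in> R" "x i * x j - c * x j * x i \<in>
         {r0 + (\<Sum>k<n. rk k * x k) | r0 rk. r0 \<in> R \<and> (\<forall>k<n. rk k \<in> R)}"
        using ax3[OF jn i] by blast
      then obtain r0 rk where r: "r0 \<in> R" "\<forall>k<n. rk k \<in> R"
        "x i * x j = c * x j * x i + r0 + (\<Sum>k<n. rk k * x k)"
        by (auto simp: algebra_simps)
      define \<gamma> where "\<gamma> = \<beta>'(i := Suc (\<beta>' i))"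
      obtain s where s: "s \<in> R" "x i * X \<beta>' - s * X \<gamma> \<in> V d'"
        using Td' i be' dd unfolding Tst_def \<gamma>_def by blast
      define v where "v = x i * X \<beta>' - s * X \<gamma>"
      obtain r1 where r1: "r1 \<in> R" "x j * s = sigma R x n j s * x j + r1"
        using sig_eq[OF jn s(1)] by blast
      have zg: "\<forall>k<j. \<gamma> k = 0" using z' ji unfolding \<gamma>_def by auto
      have ge: "\<gamma> \<in> exps n" using exps_upd[OF be' i] \<gamma>_def by simp
      have gd: "deg \<gamma> = d" using deg_Suc[OF i, of \<beta>'] dd \<gamma>_def by simp
      have tgt: "\<gamma>(j := Suc (\<gamma> j)) = \<beta>(i := Suc (\<beta> i))"
        using ji bj unfolding \<gamma>_def \<beta>'_def by (auto simp: fun_eq_iff)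
      have Xg: "x j * X \<gamma> = X (\<beta>(i := Suc (\<beta> i)))" using X_front[OF jn zg] tgt by simp
      define T where "T = X (\<beta>(i := Suc (\<beta> i)))"
      have main: "x i * X \<beta> - (c * sigma R x n j s) * T =
         c * (r1 * X \<gamma> + x j * v) + r0 * X \<beta>' + (\<Sum>k<n. rk k * (x k * X \<beta>'))"
      proof -
        have "x i * X \<beta> = (c * x j * x i + r0 + (\<Sum>k<n. rk k * x k)) * X \<beta>'"
          by (simp add: Xb mult.assoc[symmetric] r(3))
        also have "\<dots> = c * (x j * (x i * X \<beta>')) + r0 * X \<beta>' + (\<Sum>k<n. rk k * (x k * X \<beta>'))"
          by (simp add: distrib_right sum_distrib_right mult.assoc)
        also have "x i * X \<beta>' = s * X \<gamma> + v" by (simp add: v_def)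
        also have "x j * (s * X \<gamma> + v) = sigma R x n j s * T + r1 * X \<gamma> + x j * v"
          by (simp add: distrib_left mult.assoc[symmetric] r1(2) distrib_right T_def)
             (simp add: mult.assoc Xg)
        finally show ?thesis by (simp add: algebra_simps)
      qed
      have m1: "r1 * X \<gamma> \<in> V d" using V_mon[OF r1(1) ge] gd by simp
      have m2: "x j * v \<in> V d" using Ud' jn s(2) dd unfolding Ust_def v_def by simp
      have m3: "r0 * X \<beta>' \<in> V d" using V_mon[OF r(1) be'] dd by simp
      have m4: "rk k * (x k * X \<beta>') \<in> V d" if kn: "k < n" for k
      proof -
        obtain c' where c': "c' \<in> R" "x k * X \<beta>' - c' * X (\<beta>'(k := Suc (\<beta>' k))) \<in> V d'"
          using Td' kn be' dd unfolding Tst_def by blast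
        have "c' * X (\<beta>'(k := Suc (\<beta>' k))) \<in> V d"
          using V_mon[OF c'(1) exps_upd[OF be' kn]] deg_Suc[OF kn] dd by simp
        moreover have "x k * X \<beta>' - c' * X (\<beta>'(k := Suc (\<beta>' k))) \<in> V d"
          using V_mono[OF c'(2)] dd by simp
        ultimately have "x k * X \<beta>' \<in> V d" using V_add by fastforce
        thus ?thesis using r(2) kn by blast
      qed
      have "x i * X \<beta> - (c * sigma R x n j s) * T \<in> V d"
        unfolding main using m1 m2 m3 m4 c(1) by blast
      moreover have "c * sigma R x n j s \<in> R" using c(1) sigR[OF jn s(1)] by blast
      ultimately show ?thesis unfolding T_def by blast
    qed
  qed
qed

lemma U_all: "j < n \<Longrightarrow> a \<in> V d \<Longrightarrow> x j * a \<in> V (Suc d)"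
  using U_from_T[of d] T_all unfolding Ust_def by blast

lemma T_use: "i < n \<Longrightarrow> \<beta> \<in> exps n \<Longrightarrow> \<exists>c\<in>R. x i * X \<beta> - c * X (\<beta>(i := Suc (\<beta> i))) \<in> V (deg \<beta>)"
  using T_all unfolding Tst_def by blast

lemma Xmul: "\<alpha> \<in> exps n \<Longrightarrow> b \<in> V e \<Longrightarrow> X \<alpha> * b \<in> V (deg \<alpha> + e)"
proof (induction \<alpha> rule: exps_induct)
  case zero then show ?case by simp
next
  case (step \<alpha> j)
  have "X (\<alpha>(j := Suc (\<alpha> j))) * b = x j * (X \<alpha> * b)"
    using X_front[OF step(2,3)] by (metis mult.assoc)
  hence "X (\<alpha>(j := Suc (\<alpha> j))) * b \<in> V (deg (\<alpha>(j := Suc (\<alpha> j))) + e)"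
    using U_all[OF step(2) step(4)[OF step(5)]] deg_Suc[OF step(2)] by simp
  thus ?case by (simp add: fun_upd_def)
qed

lemma VV: "a \<in> V d \<Longrightarrow> b \<in> V e \<Longrightarrow> a * b \<in> V (d + e)"
proof -
  assume a: "a \<in> V d" and b: "b \<in> V e"
  let ?S = "{\<gamma>. co a \<gamma> \<noteq> 0}"
  have eq: "a * b = (\<Sum>\<gamma>\<in>?S. co a \<gamma> * (X \<gamma> * b))"
    by (subst expand) (simp add: sum_distrib_right mult.assoc)
  have "co a \<gamma> * (X \<gamma> * b) \<in> V (d + e)" if g: "\<gamma> \<in> ?S" for \<gamma>
  proof -
    have "X \<gamma> * b \<in> V (deg \<gamma> + e)" using Xmul[OF co_exps b] g by simp
    moreover have "deg \<gamma> \<le> d" using a g V_coeff by blast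
    ultimately have "X \<gamma> * b \<in> V (d + e)" using V_mono by fastforce
    thus ?thesis by (rule V_smul[OF co_R])
  qed
  thus ?thesis unfolding eq by blast
qed

lemma WV: "a \<in> W d \<Longrightarrow> b \<in> V e \<Longrightarrow> a * b \<in> W (d + e)"
proof (cases d)
  case 0 then show "a \<in> W d \<Longrightarrow> b \<in> V e \<Longrightarrow> a * b \<in> W (d + e)" using W_zero by fastforce
next
  case (Suc d') then show "a \<in> W d \<Longrightarrow> b \<in> V e \<Longrightarrow> a * b \<in> W (d + e)"
    using VV[of a d' b e] by (simp add: W_Suc)
qed

lemma VW: "a \<in> V d \<Longrightarrow> b \<in> W e \<Longrightarrow> a * b \<in> W (d + e)"
proof (cases e)
  case 0 then show "a \<in> V d \<Longrightarrow> b \<in> W e \<Longrightarrow> a * b \<in> W (d + e)" using W_zero by fastforce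
next
  case (Suc e') then show "a \<in> V d \<Longrightarrow> b \<in> W e \<Longrightarrow> a * b \<in> W (d + e)"
    using VV[of a d b e'] by (simp add: W_Suc)
qed

lemma x_V: "j < n \<Longrightarrow> x j \<in> V 1"
  using X_V[OF ue_exps] X_ue deg_ue by metis

lemma L1: "\<alpha> \<in> exps n \<Longrightarrow> \<forall>r\<in>R. sigma_pow R x n \<alpha> r \<in> R \<and> (r \<noteq> 0 \<longrightarrow> sigma_pow R x n \<alpha> r \<noteq> 0)
   \<and> X \<alpha> * r - sigma_pow R x n \<alpha> r * X \<alpha> \<in> W (deg \<alpha>)"
proof (induction \<alpha> rule: exps_induct)
  case zero then show ?case by simp
next
  case (step \<alpha> j)
  show ?case
  proof
    fix r assume r: "r \<in> R"
    let ?s = "sigma_pow R x n \<alpha> r"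
    have s: "?s \<in> R" "r \<noteq> 0 \<longrightarrow> ?s \<noteq> 0" "X \<alpha> * r - ?s * X \<alpha> \<in> W (deg \<alpha>)"
      using step(4) r by auto
    have S: "sigma_pow R x n (\<alpha>(j := Suc (\<alpha> j))) r = sigma R x n j ?s"
      using S_front[OF step(2,3)] by simp
    have XX: "X (\<alpha>(j := Suc (\<alpha> j))) = x j * X \<alpha>" using X_front[OF step(2,3)] by simp
    obtain r1 where r1: "r1 \<in> R" "x j * ?s = sigma R x n j ?s * x j + r1"
      using sig_eq[OF step(2) s(1)] by blast
    define w where "w = X \<alpha> * r - ?s * X \<alpha>"
    have "X (\<alpha>(j := Suc (\<alpha> j))) * r - sigma R x n j ?s * X (\<alpha>(j := Suc (\<alpha> j)))
        = r1 * X \<alpha> + x j * w"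
    proof -
      have "X (\<alpha>(j := Suc (\<alpha> j))) * r = x j * (?s * X \<alpha> + w)"
        by (simp add: XX w_def mult.assoc)
      also have "\<dots> = sigma R x n j ?s * (x j * X \<alpha>) + r1 * X \<alpha> + x j * w"
        by (simp add: distrib_left mult.assoc[symmetric] r1(2) distrib_right)
      finally show ?thesis by (simp add: XX)
    qed
    moreover have "r1 * X \<alpha> \<in> W (Suc (deg \<alpha>))" using V_mon[OF r1(1) step(1)] by (simp add: W_Suc)
    moreover have "x j * w \<in> W (Suc (deg \<alpha>))"
      using VW[OF x_V[OF step(2)], of w "deg \<alpha>"] s(3) w_def by simp
    ultimately show "sigma_pow R x n (\<alpha>(j := Suc (\<alpha> j))) r \<in> R \<and>
         (r \<noteq> 0 \<longrightarrow> sigma_pow R x n (\<alpha>(j := Suc (\<alpha> j))) r \<noteq> 0) \<and>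
         X (\<alpha>(j := Suc (\<alpha> j))) * r - sigma_pow R x n (\<alpha>(j := Suc (\<alpha> j))) r * X (\<alpha>(j := Suc (\<alpha> j)))
         \<in> W (deg (\<alpha>(j := Suc (\<alpha> j))))"
      unfolding S deg_Suc[OF step(2)] using sig_prop[OF step(2) s(1)] s(2) by auto
  qed
qed

lemma spR: "\<alpha> \<in> exps n \<Longrightarrow> r \<in> R \<Longrightarrow> sigma_pow R x n \<alpha> r \<in> R" using L1 by blast
lemma sp_nz: "\<alpha> \<in> exps n \<Longrightarrow> r \<in> R \<Longrightarrow> r \<noteq> 0 \<Longrightarrow> sigma_pow R x n \<alpha> r \<noteq> 0" using L1 by blast
lemma sp_W: "\<alpha> \<in> exps n \<Longrightarrow> r \<in> R \<Longrightarrow> X \<alpha> * r - sigma_pow R x n \<alpha> r * X \<alpha> \<in> W (deg \<alpha>)" using L1 by blast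

lemma sp_0: "\<alpha> \<in> exps n \<Longrightarrow> sigma_pow R x n \<alpha> 0 = 0"
proof -
  assume a: "\<alpha> \<in> exps n"
  have "0 - sigma_pow R x n \<alpha> 0 * X \<alpha> \<in> W (deg \<alpha>)" using sp_W[OF a R0] by simp
  hence "co (0 - sigma_pow R x n \<alpha> 0 * X \<alpha>) \<alpha> = 0" by (rule W_coeff) simp
  thus ?thesis using co_mon[OF spR[OF a R0] a] by (simp add: co_diff co_neg)
qed

lemma L2gen: "\<alpha> \<in> exps n \<Longrightarrow> \<beta> \<in> exps n \<Longrightarrow>
   \<exists>s\<in>R. X \<alpha> * X \<beta> - s * X (add_exp \<alpha> \<beta>) \<in> W (deg \<alpha> + deg \<beta>)"
proof (induction \<alpha> rule: exps_induct)
  case zero then show ?case by (intro bexI[of _ 1]) (auto simp: add_exp_def)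
next
  case (step \<alpha> j)
  obtain s where s: "s \<in> R" "X \<alpha> * X \<beta> - s * X (add_exp \<alpha> \<beta>) \<in> W (deg \<alpha> + deg \<beta>)"
    using step by blast
  let ?\<mu> = "add_exp \<alpha> \<beta>"
  have me: "?\<mu> \<in> exps n" using add_exps step by blast
  have md: "deg ?\<mu> = deg \<alpha> + deg \<beta>" by (rule deg_add)
  have ad: "add_exp (\<alpha>(j := Suc (\<alpha> j))) \<beta> = ?\<mu>(j := Suc (?\<mu> j))"
    by (auto simp: add_exp_def fun_eq_iff)
  obtain c where c: "c \<in> R" "x j * X ?\<mu> - c * X (?\<mu>(j := Suc (?\<mu> j))) \<in> V (deg ?\<mu>)"
    using T_use[OF step(2) me] by blast
  obtain r1 where r1: "r1 \<in> R" "x j * s = sigma R x n j s * x j + r1"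
    using sig_eq[OF step(2) s(1)] by blast
  define w where "w = X \<alpha> * X \<beta> - s * X ?\<mu>"
  define v where "v = x j * X ?\<mu> - c * X (?\<mu>(j := Suc (?\<mu> j)))"
  define XA where "XA = X (\<alpha>(j := Suc (\<alpha> j)))"
  have XX: "XA = x j * X \<alpha>" using X_front[OF step(2,3)] XA_def by simp
  have eq0: "XA * X \<beta> - (sigma R x n j s * c) * X (?\<mu>(j := Suc (?\<mu> j)))
      = sigma R x n j s * v + r1 * X ?\<mu> + x j * w"
  proof -
    have "XA * X \<beta> = x j * (s * X ?\<mu> + w)"
      by (simp add: XX w_def mult.assoc)
    also have "\<dots> = sigma R x n j s * (x j * X ?\<mu>) + r1 * X ?\<mu> + x j * w"
      by (simp add: distrib_left mult.assoc[symmetric] r1(2) distrib_right)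
    also have "x j * X ?\<mu> = c * X (?\<mu>(j := Suc (?\<mu> j))) + v" by (simp add: v_def)
    finally show ?thesis by (simp add: algebra_simps)
  qed
  note eq = eq0[unfolded XA_def]
  have "sigma R x n j s * v \<in> W (Suc (deg \<alpha> + deg \<beta>))"
    using c(2) md v_def sigR[OF step(2) s(1)] by (simp add: W_Suc V_smul)
  moreover have "r1 * X ?\<mu> \<in> W (Suc (deg \<alpha> + deg \<beta>))"
    using V_mon[OF r1(1) me] md by (simp add: W_Suc)
  moreover have "x j * w \<in> W (Suc (deg \<alpha> + deg \<beta>))"
    using VW[OF x_V[OF step(2)], of w "deg \<alpha> + deg \<beta>"] s(2) w_def by simp
  ultimately have "X (\<alpha>(j := Suc (\<alpha> j))) * X \<beta> - (sigma R x n j s * c) * X (add_exp (\<alpha>(j := Suc (\<alpha> j))) \<beta>)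
     \<in> W (deg (\<alpha>(j := Suc (\<alpha> j))) + deg \<beta>)"
    unfolding ad eq deg_Suc[OF step(2)] using W_add by simp
  moreover have "sigma R x n j s * c \<in> R" using sigR[OF step(2) s(1)] c(1) by blast
  ultimately have "\<exists>s\<in>R. X (\<alpha>(j := Suc (\<alpha> j))) * X \<beta> - s * X (add_exp (\<alpha>(j := Suc (\<alpha> j))) \<beta>)
     \<in> W (deg (\<alpha>(j := Suc (\<alpha> j))) + deg \<beta>)" by blast
  thus ?case by (simp add: fun_upd_def)
qed

lemma cabR: "cab R x n \<alpha> \<beta> \<in> R" by (simp add: cab_def)

lemma L2: "\<alpha> \<in> exps n \<Longrightarrow> \<beta> \<in> exps n \<Longrightarrow>
   X \<alpha> * X \<beta> - cab R x n \<alpha> \<beta> * X (add_exp \<alpha> \<beta>) \<in> W (deg \<alpha> + deg \<beta>)"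
proof -
  assume a: "\<alpha> \<in> exps n" "\<beta> \<in> exps n"
  obtain s where s: "s \<in> R" "X \<alpha> * X \<beta> - s * X (add_exp \<alpha> \<beta>) \<in> W (deg \<alpha> + deg \<beta>)"
    using L2gen[OF a] by blast
  define w where "w = X \<alpha> * X \<beta> - s * X (add_exp \<alpha> \<beta>)"
  have "co w (add_exp \<alpha> \<beta>) = 0" using W_coeff[OF s(2)] w_def deg_add by simp
  moreover have "X \<alpha> * X \<beta> = s * X (add_exp \<alpha> \<beta>) + w" by (simp add: w_def)
  ultimately have "cab R x n \<alpha> \<beta> = s"
    unfolding cab_def using co_mon[OF s(1) add_exps[OF a]] by (simp add: co_add)
  thus ?thesis using s by simp
qed

end

context PBW begin

lemma qax1: "quasi_comm R x n \<Longrightarrow> i < n \<Longrightarrow> r \<in> R \<Longrightarrow> r \<noteq> 0 \<Longrightarrow> \<exists>c\<in>R. c \<noteq> 0 \<and> x i * r = c * x i"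
proof -
  assume q: "quasi_comm R x n" and a: "i < n" "r \<in> R" "r \<noteq> 0"
  from q have "\<forall>i<n. \<forall>r\<in>R. r \<noteq> 0 \<longrightarrow> (\<exists>c\<in>R. c \<noteq> 0 \<and> x i * r = c * x i)"
    unfolding quasi_comm_def by (elim conjE) assumption
  thus ?thesis using a by blast
qed

lemma qax2: "quasi_comm R x n \<Longrightarrow> i < n \<Longrightarrow> j < n \<Longrightarrow> \<exists>c\<in>R. c \<noteq> 0 \<and> x j * x i = c * x i * x j"
proof -
  assume q: "quasi_comm R x n" and a: "i < n" "j < n"
  from q have "\<forall>i<n. \<forall>j<n. \<exists>c\<in>R. c \<noteq> 0 \<and> x j * x i = c * x i * x j"
    unfolding quasi_comm_def by (elim conjE) assumption
  thus ?thesis using a by blast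
qed

lemma qsig: assumes q: "quasi_comm R x n" and i: "i < n" and s: "s \<in> R"
  shows "x i * s = sigma R x n i s * x i"
proof (cases "s = 0")
  case True then show ?thesis by (simp add: sigma_def)
next
  case False
  then obtain c where c: "c \<in> R" "x i * s = c * x i" using qax1[OF q i s] by blast
  have e: "x i * s = c * X (ue i)" using c(2) X_ue[OF i] by simp
  have "sigma R x n i s = c"
    unfolding sigma_def ue_unit e using co_mon[OF c(1) ue_exps[OF i]] by simp
  thus ?thesis using c by simp
qed

lemma QT: assumes q: "quasi_comm R x n"
  shows "\<forall>i<n. \<forall>\<beta>\<in>exps n. deg \<beta> = d \<longrightarrow> (\<exists>c\<in>R. x i * X \<beta> = c * X (\<beta>(i := Suc (\<beta> i))))"
proof (induction d rule: less_induct)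
  case (less d)
  show ?case
  proof (intro allI impI ballI)
    fix i \<beta> assume i: "i < n" and be: "\<beta> \<in> exps n" and bd: "deg \<beta> = d"
    show "\<exists>c\<in>R. x i * X \<beta> = c * X (\<beta>(i := Suc (\<beta> i)))"
    proof (cases "\<forall>k<i. \<beta> k = 0")
      case True
      then show ?thesis using X_front[OF i True] by (intro bexI[of _ 1]) auto
    next
      case False
      then obtain k where k: "k < i" "\<beta> k \<noteq> 0" by blast
      define j where "j = (LEAST k. \<beta> k \<noteq> 0)"
      have bj: "\<beta> j \<noteq> 0" using LeastI[of "\<lambda>k. \<beta> k \<noteq> 0", OF k(2)] j_def by simp
      have jk: "j \<le> k" using Least_le[of "\<lambda>k. \<beta> k \<noteq> 0", OF k(2)] j_def by simp
      hence ji: "j < i" using k by simp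
      have jn: "j < n" using ji i by simp
      have z: "\<forall>k<j. \<beta> k = 0" using not_less_Least j_def by blast
      define \<beta>' where "\<beta>' = \<beta>(j := \<beta> j - 1)"
      have beq: "\<beta> = \<beta>'(j := Suc (\<beta>' j))" using bj unfolding \<beta>'_def by auto
      have be': "\<beta>' \<in> exps n" using exps_upd[OF be jn] \<beta>'_def by simp
      have z': "\<forall>k<j. \<beta>' k = 0" using z \<beta>'_def by simp
      obtain d' where dd: "d = Suc d'" "deg \<beta>' = d'"
        using deg_Suc[OF jn, of \<beta>'] beq bd by auto
      have Xb: "X \<beta> = x j * X \<beta>'" using X_front[OF jn z'] beq by simp
      obtain c where c: "c \<in> R" "x i * x j = c * x j * x i" using qax2[OF q jn i] by blast
      define \<gamma> where "\<gamma> = \<beta>'(i := Suc (\<beta>' i))"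
      obtain s where s: "s \<in> R" "x i * X \<beta>' = s * X \<gamma>"
        using less dd i be' unfolding \<gamma>_def by blast
      have zg: "\<forall>k<j. \<gamma> k = 0" using z' ji unfolding \<gamma>_def by auto
      have tgt: "\<gamma>(j := Suc (\<gamma> j)) = \<beta>(i := Suc (\<beta> i))"
        using ji bj unfolding \<gamma>_def \<beta>'_def by (auto simp: fun_eq_iff)
      have Xg: "x j * X \<gamma> = X (\<beta>(i := Suc (\<beta> i)))" using X_front[OF jn zg] tgt by simp
      have "x i * X \<beta> = c * (x j * (x i * X \<beta>'))"
        by (simp add: Xb mult.assoc[symmetric] c(2))
      also have "\<dots> = c * ((x j * s) * X \<gamma>)" by (simp add: s(2) mult.assoc)
      also have "\<dots> = (c * sigma R x n j s) * X (\<beta>(i := Suc (\<beta> i)))"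
        by (simp add: qsig[OF q jn s(1)] mult.assoc Xg)
      finally show ?thesis using c(1) sigR[OF jn s(1)] by blast
    qed
  qed
qed

lemma QT_use: "quasi_comm R x n \<Longrightarrow> i < n \<Longrightarrow> \<beta> \<in> exps n \<Longrightarrow> \<exists>c\<in>R. x i * X \<beta> = c * X (\<beta>(i := Suc (\<beta> i)))"
  using QT by blast

lemma QL1: assumes q: "quasi_comm R x n" shows "\<alpha> \<in> exps n \<Longrightarrow> \<forall>r\<in>R. X \<alpha> * r = sigma_pow R x n \<alpha> r * X \<alpha>"
proof (induction \<alpha> rule: exps_induct)
  case zero then show ?case by simp
next
  case (step \<alpha> j)
  have "X (\<alpha>(j := Suc (\<alpha> j))) * r = sigma_pow R x n (\<alpha>(j := Suc (\<alpha> j))) r * X (\<alpha>(j := Suc (\<alpha> j)))"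
    if r: "r \<in> R" for r
  proof -
    have "X (\<alpha>(j := Suc (\<alpha> j))) * r = x j * (X \<alpha> * r)"
      using X_front[OF step(2,3)] by (metis mult.assoc)
    also have "\<dots> = (x j * sigma_pow R x n \<alpha> r) * X \<alpha>" using step(4) r by (simp add: mult.assoc)
    also have "\<dots> = sigma R x n j (sigma_pow R x n \<alpha> r) * (x j * X \<alpha>)"
      by (simp add: qsig[OF q step(2) spR[OF step(1) r]] mult.assoc)
    finally show ?thesis using X_front[OF step(2,3)] S_front[OF step(2,3)] by simp
  qed
  thus ?case by (simp add: fun_upd_def)
qed

lemma QL2gen: assumes q: "quasi_comm R x n" and b: "\<beta> \<in> exps n"
  shows "\<alpha> \<in> exps n \<Longrightarrow> \<exists>s\<in>R. X \<alpha> * X \<beta> = s * X (add_exp \<alpha> \<beta>)"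
proof (induction \<alpha> rule: exps_induct)
  case zero then show ?case by (intro bexI[of _ 1]) (auto simp: add_exp_def)
next
  case (step \<alpha> j)
  obtain s where s: "s \<in> R" "X \<alpha> * X \<beta> = s * X (add_exp \<alpha> \<beta>)" using step by blast
  let ?\<mu> = "add_exp \<alpha> \<beta>"
  have me: "?\<mu> \<in> exps n" using add_exps step b by blast
  have ad: "add_exp (\<alpha>(j := Suc (\<alpha> j))) \<beta> = ?\<mu>(j := Suc (?\<mu> j))"
    by (auto simp: add_exp_def fun_eq_iff)
  obtain c where c: "c \<in> R" "x j * X ?\<mu> = c * X (?\<mu>(j := Suc (?\<mu> j)))"
    using QT_use[OF q step(2) me] by blast
  define XA where "XA = X (\<alpha>(j := Suc (\<alpha> j)))"
  have XX: "XA = x j * X \<alpha>" using X_front[OF step(2,3)] XA_def by simp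
  have "XA * X \<beta> = (x j * s) * X ?\<mu>" by (simp add: XX mult.assoc s(2))
  also have "\<dots> = (sigma R x n j s * c) * X (?\<mu>(j := Suc (?\<mu> j)))"
    by (simp add: qsig[OF q step(2) s(1)] mult.assoc c(2))
  finally have "X (\<alpha>(j := Suc (\<alpha> j))) * X \<beta> = (sigma R x n j s * c) * X (add_exp (\<alpha>(j := Suc (\<alpha> j))) \<beta>)"
    unfolding XA_def ad .
  hence "\<exists>s\<in>R. X (\<alpha>(j := Suc (\<alpha> j))) * X \<beta> = s * X (add_exp (\<alpha>(j := Suc (\<alpha> j))) \<beta>)"
    using sigR[OF step(2) s(1)] c(1) by blast
  thus ?case by (simp add: fun_upd_def)
qed

lemma QL2: "quasi_comm R x n \<Longrightarrow> \<alpha> \<in> exps n \<Longrightarrow> \<beta> \<in> exps n \<Longrightarrow>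
   X \<alpha> * X \<beta> = cab R x n \<alpha> \<beta> * X (add_exp \<alpha> \<beta>)"
proof -
  assume q: "quasi_comm R x n" and a: "\<alpha> \<in> exps n" "\<beta> \<in> exps n"
  obtain s where s: "s \<in> R" "X \<alpha> * X \<beta> = s * X (add_exp \<alpha> \<beta>)" using QL2gen[OF q a(2) a(1)] by blast
  have "cab R x n \<alpha> \<beta> = s"
    unfolding cab_def s(2) using co_mon[OF s(1) add_exps[OF a]] by simp
  thus ?thesis using s by simp
qed

end


locale PBWO = PBW R x n for R :: "'a::ring_1 set" and x n +
  fixes m :: nat and le :: "(nat \<Rightarrow> nat) \<Rightarrow> (nat \<Rightarrow> nat) \<Rightarrow> bool"
    and leM :: "(nat \<Rightarrow> nat) \<times> nat \<Rightarrow> (nat \<Rightarrow> nat) \<times> nat \<Rightarrow> bool"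
  assumes ordA: "mon_order_A R x n le" and ordM: "mon_order_M R x n m le leM"
    and cinv: "\<forall>\<alpha>\<in>exps n. \<forall>\<beta>\<in>exps n. unit_in R (cab R x n \<alpha> \<beta>)"
    and nt: "(1::'a) \<noteq> 0"
begin

abbreviation "MM \<equiv> exps n \<times> {..<m}"
abbreviation "vs \<equiv> vsupp R x n m"
abbreviation "lm \<equiv> lmv R x n m leM"

lemma le_refl: "\<alpha> \<in> exps n \<Longrightarrow> le \<alpha> \<alpha>"
proof -
  have "\<forall>\<alpha>\<in>exps n. le \<alpha> \<alpha>" using ordA unfolding mon_order_A_def by (elim conjE) assumption
  thus "\<alpha> \<in> exps n \<Longrightarrow> le \<alpha> \<alpha>" by blast
qed
lemma le_antisym: "\<alpha> \<in> exps n \<Longrightarrow> \<beta> \<in> exps n \<Longrightarrow> le \<alpha> \<beta> \<Longrightarrow> le \<beta> \<alpha> \<Longrightarrow> \<alpha> = \<beta>"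
proof -
  have "\<forall>\<alpha>\<in>exps n. \<forall>\<beta>\<in>exps n. le \<alpha> \<beta> \<and> le \<beta> \<alpha> \<longrightarrow> \<alpha> = \<beta>"
    using ordA unfolding mon_order_A_def by (elim conjE) assumption
  thus "\<alpha> \<in> exps n \<Longrightarrow> \<beta> \<in> exps n \<Longrightarrow> le \<alpha> \<beta> \<Longrightarrow> le \<beta> \<alpha> \<Longrightarrow> \<alpha> = \<beta>" by blast
qed
lemma le_deg: "\<alpha> \<in> exps n \<Longrightarrow> \<beta> \<in> exps n \<Longrightarrow> deg \<alpha> < deg \<beta> \<Longrightarrow> le \<alpha> \<beta>"
proof -
  have "\<forall>\<alpha>\<in>exps n. \<forall>\<beta>\<in>exps n. deg_exp n \<alpha> < deg_exp n \<beta> \<longrightarrow> le \<alpha> \<beta>"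
    using ordA unfolding mon_order_A_def by (elim conjE) assumption
  thus "\<alpha> \<in> exps n \<Longrightarrow> \<beta> \<in> exps n \<Longrightarrow> deg \<alpha> < deg \<beta> \<Longrightarrow> le \<alpha> \<beta>" by blast
qed

lemma M_refl: "K \<in> MM \<Longrightarrow> leM K K"
proof -
  have "\<forall>K\<in>MM. leM K K" using ordM unfolding mon_order_M_def Let_def by (elim conjE) assumption
  thus "K \<in> MM \<Longrightarrow> leM K K" by blast
qed
lemma M_antisym: "K \<in> MM \<Longrightarrow> L \<in> MM \<Longrightarrow> leM K L \<Longrightarrow> leM L K \<Longrightarrow> K = L"
proof -
  have "\<forall>K\<in>MM. \<forall>L\<in>MM. leM K L \<and> leM L K \<longrightarrow> K = L"
    using ordM unfolding mon_order_M_def Let_def by (elim conjE) assumption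
  thus "K \<in> MM \<Longrightarrow> L \<in> MM \<Longrightarrow> leM K L \<Longrightarrow> leM L K \<Longrightarrow> K = L" by blast
qed
lemma M_trans: "K \<in> MM \<Longrightarrow> L \<in> MM \<Longrightarrow> Z \<in> MM \<Longrightarrow> leM K L \<Longrightarrow> leM L Z \<Longrightarrow> leM K Z"
proof -
  have "\<forall>K\<in>MM. \<forall>L\<in>MM. \<forall>Z\<in>MM. leM K L \<and> leM L Z \<longrightarrow> leM K Z"
    using ordM unfolding mon_order_M_def Let_def by (elim conjE) assumption
  thus "K \<in> MM \<Longrightarrow> L \<in> MM \<Longrightarrow> Z \<in> MM \<Longrightarrow> leM K L \<Longrightarrow> leM L Z \<Longrightarrow> leM K Z" by blast
qed
lemma M_total: "K \<in> MM \<Longrightarrow> L \<in> MM \<Longrightarrow> leM K L \<or> leM L K"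
proof -
  have "\<forall>K\<in>MM. \<forall>L\<in>MM. leM K L \<or> leM L K"
    using ordM unfolding mon_order_M_def Let_def by (elim conjE) assumption
  thus "K \<in> MM \<Longrightarrow> L \<in> MM \<Longrightarrow> leM K L \<or> leM L K" by blast
qed
lemma M_mul: "\<alpha> \<in> exps n \<Longrightarrow> \<beta> \<in> exps n \<Longrightarrow> \<gamma> \<in> exps n \<Longrightarrow> i < m \<Longrightarrow> j < m \<Longrightarrow> leM (\<alpha>, i) (\<beta>, j) \<Longrightarrow>
          leM (lmA R x n le (X \<gamma> * X \<alpha>), i) (lmA R x n le (X \<gamma> * X \<beta>), j)"
proof -
  have "\<forall>\<alpha>\<in>exps n. \<forall>\<beta>\<in>exps n. \<forall>\<gamma>\<in>exps n. \<forall>i<m. \<forall>j<m. leM (\<alpha>, i) (\<beta>, j) \<longrightarrow>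
          leM (lmA R x n le (xmon x n \<gamma> * xmon x n \<alpha>), i) (lmA R x n le (xmon x n \<gamma> * xmon x n \<beta>), j)"
    using ordM unfolding mon_order_M_def Let_def by (elim conjE) assumption
  thus "\<alpha> \<in> exps n \<Longrightarrow> \<beta> \<in> exps n \<Longrightarrow> \<gamma> \<in> exps n \<Longrightarrow> i < m \<Longrightarrow> j < m \<Longrightarrow> leM (\<alpha>, i) (\<beta>, j) \<Longrightarrow>
          leM (lmA R x n le (X \<gamma> * X \<alpha>), i) (lmA R x n le (X \<gamma> * X \<beta>), j)" by blast
qed
lemma M_deg: "\<alpha> \<in> exps n \<Longrightarrow> \<beta> \<in> exps n \<Longrightarrow> i < m \<Longrightarrow> j < m \<Longrightarrow> deg \<alpha> < deg \<beta> \<Longrightarrow> leM (\<alpha>, i) (\<beta>, j)"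
proof -
  have "\<forall>\<alpha>\<in>exps n. \<forall>\<beta>\<in>exps n. \<forall>i<m. \<forall>j<m.
          deg_exp n \<alpha> < deg_exp n \<beta> \<longrightarrow> leM (\<alpha>, i) (\<beta>, j)"
    using ordM unfolding mon_order_M_def Let_def by (elim conjE) assumption
  thus "\<alpha> \<in> exps n \<Longrightarrow> \<beta> \<in> exps n \<Longrightarrow> i < m \<Longrightarrow> j < m \<Longrightarrow> deg \<alpha> < deg \<beta> \<Longrightarrow> leM (\<alpha>, i) (\<beta>, j)" by blast
qed

lemma cab_nz: "\<alpha> \<in> exps n \<Longrightarrow> \<beta> \<in> exps n \<Longrightarrow> cab R x n \<alpha> \<beta> \<noteq> 0"
  using cinv nt unfolding unit_in_def by fastforce

lemma unit_mult_nz: "\<alpha> \<in> exps n \<Longrightarrow> \<beta> \<in> exps n \<Longrightarrow> s \<noteq> 0 \<Longrightarrow> s * cab R x n \<alpha> \<beta> \<noteq> 0"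
proof -
  assume a: "\<alpha> \<in> exps n" "\<beta> \<in> exps n" "s \<noteq> 0"
  obtain d where "cab R x n \<alpha> \<beta> * d = 1" using cinv a unfolding unit_in_def by blast
  thus ?thesis using a(3) by (metis mult.assoc mult_1_right mult_zero_left)
qed

lemma lmA_prod: assumes a: "\<alpha> \<in> exps n" "\<delta> \<in> exps n"
  shows "lmA R x n le (X \<alpha> * X \<delta>) = add_exp \<alpha> \<delta>"
proof -
  let ?P = "X \<alpha> * X \<delta>" and ?\<mu> = "add_exp \<alpha> \<delta>"
  have me: "?\<mu> \<in> exps n" using add_exps[OF a] .
  have w: "?P - cab R x n \<alpha> \<delta> * X ?\<mu> \<in> W (deg ?\<mu>)" using L2[OF a] deg_add by simp
  have mem: "?\<mu> \<in> supp R x n ?P" unfolding supp_def using cab_nz[OF a] by (simp add: cab_def)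
  have mx: "le \<beta> ?\<mu>" if b: "\<beta> \<in> supp R x n ?P" for \<beta>
  proof (cases "\<beta> = ?\<mu>")
    case True then show ?thesis using le_refl[OF me] by simp
  next
    case False
    have "co ?P \<beta> \<noteq> 0" using b by (simp add: supp_def)
    hence "co (?P - cab R x n \<alpha> \<delta> * X ?\<mu>) \<beta> \<noteq> 0"
      using False co_mon[OF cabR me] by (simp add: co_diff)
    hence "deg \<beta> < deg ?\<mu>" using w by (auto simp: W_def)
    moreover have "\<beta> \<in> exps n" using b co_exps by (auto simp: supp_def)
    ultimately show ?thesis using le_deg me by blast
  qed
  show ?thesis unfolding lmA_def
  proof (rule the_equality)
    show "?\<mu> \<in> supp R x n ?P \<and> (\<forall>\<beta>\<in>supp R x n ?P. le \<beta> ?\<mu>)" using mem mx by blast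
  next
    fix \<beta> assume "\<beta> \<in> supp R x n ?P \<and> (\<forall>\<gamma>\<in>supp R x n ?P. le \<gamma> \<beta>)"
    moreover hence "\<beta> \<in> exps n" using co_exps by (auto simp: supp_def)
    ultimately show "\<beta> = ?\<mu>" using mem mx le_antisym me by blast
  qed
qed

lemma M_mono: "\<alpha> \<in> exps n \<Longrightarrow> \<delta> \<in> exps n \<Longrightarrow> \<gamma> \<in> exps n \<Longrightarrow> i < m \<Longrightarrow> j < m \<Longrightarrow>
   leM (\<delta>, j) (\<gamma>, i) \<Longrightarrow> leM (add_exp \<alpha> \<delta>, j) (add_exp \<alpha> \<gamma>, i)"
  using M_mul[of \<delta> \<gamma> \<alpha> j i] lmA_prod by simp

lemma add_cancel: "add_exp \<alpha> \<delta> = add_exp \<alpha> \<gamma> \<longleftrightarrow> \<delta> = \<gamma>"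
  by (auto simp: add_exp_def fun_eq_iff)

lemma leM_deg: "(\<delta>, j) \<in> MM \<Longrightarrow> (\<gamma>, i) \<in> MM \<Longrightarrow> leM (\<delta>, j) (\<gamma>, i) \<Longrightarrow> deg \<delta> \<le> deg \<gamma>"
proof (rule ccontr)
  assume a: "(\<delta>, j) \<in> MM" "(\<gamma>, i) \<in> MM" "leM (\<delta>, j) (\<gamma>, i)" "\<not> deg \<delta> \<le> deg \<gamma>"
  hence "leM (\<gamma>, i) (\<delta>, j)" using M_deg by auto
  hence "(\<gamma>, i) = (\<delta>, j)" using M_antisym a by blast
  thus False using a by simp
qed

lemma vs_mem: "(\<alpha>, i) \<in> vs v \<longleftrightarrow> i < m \<and> co (v i) \<alpha> \<noteq> 0"
  by (simp add: vsupp_def supp_def)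

lemma vs_M: "vs v \<subseteq> MM" using co_exps by (auto simp: vsupp_def supp_def)

lemma vs_fin: "finite (vs v)"
proof -
  have "vs v \<subseteq> (\<Union>i<m. {\<alpha>. co (v i) \<alpha> \<noteq> 0} \<times> {i})" by (auto simp: vsupp_def supp_def)
  moreover have "finite (\<Union>i<m. {\<alpha>. co (v i) \<alpha> \<noteq> 0} \<times> {i})" by simp
  ultimately show ?thesis by (rule finite_subset)
qed

lemma vs_empty: "vec_in m v \<Longrightarrow> vs v = {} \<longleftrightarrow> v = (\<lambda>_. 0)"
proof
  assume v: "vec_in m v" and e: "vs v = {}"
  show "v = (\<lambda>_. 0)"
  proof
    fix i show "v i = 0"
    proof (cases "i < m")
      case True
      hence "co (v i) = (\<lambda>_. 0)" using e by (auto simp: vsupp_def supp_def)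
      thus ?thesis by (rule co_zero_iff)
    next
      case False then show ?thesis using v by (simp add: vec_in_def)
    qed
  qed
next
  assume "v = (\<lambda>_. 0)" thus "vs v = {}" by (simp add: vsupp_def supp_def)
qed

lemma max_ex: "finite S \<Longrightarrow> S \<noteq> {} \<Longrightarrow> S \<subseteq> MM \<Longrightarrow> \<exists>K\<in>S. \<forall>L\<in>S. leM L K"
proof (induction S rule: finite_ne_induct)
  case (singleton a) then show ?case using M_refl by auto
next
  case (insert a S)
  then obtain K where K: "K \<in> S" "\<forall>L\<in>S. leM L K" by auto
  have aM: "a \<in> MM" and XM: "K \<in> MM" and SM: "S \<subseteq> MM" using insert K by auto
  show ?case
  proof (cases "leM K a")
    case True
    have "\<forall>L\<in>insert a S. leM L a"
      using True K M_trans[OF _ XM aM] SM M_refl[OF aM] by auto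
    thus ?thesis by blast
  next
    case False
    hence "leM a K" using M_total[OF aM XM] by blast
    thus ?thesis using K by auto
  qed
qed

lemma lmv_eq: "K \<in> vs v \<Longrightarrow> \<forall>L\<in>vs v. leM L K \<Longrightarrow> lm v = Some K"
proof -
  assume a: "K \<in> vs v" "\<forall>L\<in>vs v. leM L K"
  have "(THE K. K \<in> vs v \<and> (\<forall>L\<in>vs v. leM L K)) = K"
  proof (rule the_equality)
    show "K \<in> vs v \<and> (\<forall>L\<in>vs v. leM L K)" using a by blast
  next
    fix Z assume "Z \<in> vs v \<and> (\<forall>L\<in>vs v. leM L Z)"
    thus "Z = K" using a M_antisym vs_M by blast
  qed
  thus ?thesis unfolding lmv_def using a by auto
qed

lemma lmv_Some: "lm v = Some K \<Longrightarrow> K \<in> vs v \<and> (\<forall>L\<in>vs v. leM L K)"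
proof -
  assume l: "lm v = Some K"
  hence ne: "vs v \<noteq> {}" unfolding lmv_def by (auto split: if_splits)
  obtain Z where "Z \<in> vs v" "\<forall>L\<in>vs v. leM L Z" using max_ex[OF vs_fin ne vs_M] by blast
  moreover hence "lm v = Some Z" by (rule lmv_eq)
  ultimately show ?thesis using l by simp
qed

lemma lmv_M: "lm v = Some K \<Longrightarrow> K \<in> MM" using lmv_Some vs_M by blast

lemma lmv_None: "vec_in m v \<Longrightarrow> lm v = None \<longleftrightarrow> v = (\<lambda>_. 0)"
proof -
  assume v: "vec_in m v"
  have h1: "lm v \<noteq> None" if ne: "vs v \<noteq> {}"
  proof -
    obtain K where "K \<in> vs v" "\<forall>L\<in>vs v. leM L K" using max_ex[OF vs_fin ne vs_M] by blast
    hence "lm v = Some K" by (rule lmv_eq)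
    thus ?thesis by simp
  qed
  have h2: "vs v = {} \<Longrightarrow> lm v = None" by (simp add: lmv_def)
  show ?thesis
  proof (cases "vs v = {}")
    case True thus ?thesis using h2 vs_empty[OF v] by simp
  next
    case False thus ?thesis using h1 vs_empty[OF v] by simp
  qed
qed

lemma lcv_eq: "lm v = Some (\<alpha>, i) \<Longrightarrow> lcv R x n m leM v = co (v i) \<alpha>"
  by (simp add: lcv_def)

definition below where "below K v \<longleftrightarrow> (\<forall>L\<in>vs v. leM L K \<and> L \<noteq> K)"

lemma below_iff: assumes XM: "K \<in> MM" and v: "vec_in m v"
  shows "(v = (\<lambda>_. 0) \<or> mgt leM (Some K) (lm v)) \<longleftrightarrow> below K v"
proof
  assume "v = (\<lambda>_. 0) \<or> mgt leM (Some K) (lm v)"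
  thus "below K v"
  proof
    assume "v = (\<lambda>_. 0)" thus ?thesis using vs_empty[OF v] by (simp add: below_def)
  next
    assume mg: "mgt leM (Some K) (lm v)"
    show ?thesis
    proof (cases "lm v")
      case None
      hence "v = (\<lambda>_. 0)" using lmv_None[OF v] by simp
      thus ?thesis using vs_empty[OF v] by (simp add: below_def)
    next
      case (Some L')
    then obtain L where L: "lm v = Some L" "leM L K" "K \<noteq> L"
      using mg by auto
    have YM: "L \<in> MM" using lmv_M[OF L(1)] .
    show ?thesis unfolding below_def
    proof
      fix Z assume Z: "Z \<in> vs v"
      have ZM: "Z \<in> MM" using Z vs_M by blast
      have ZY: "leM Z L" using lmv_Some[OF L(1)] Z by blast
      have "leM Z K" using M_trans[OF ZM YM XM ZY L(2)] .
      moreover have "Z \<noteq> K" using ZY L M_antisym[OF YM XM] by blast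
      ultimately show "leM Z K \<and> Z \<noteq> K" by blast
    qed
    qed
  qed
next
  assume b: "below K v"
  show "v = (\<lambda>_. 0) \<or> mgt leM (Some K) (lm v)"
  proof (cases "v = (\<lambda>_. 0)")
    case False
    then obtain L where L: "lm v = Some L" using lmv_None[OF v] by (cases "lm v") auto
    hence "L \<in> vs v" using lmv_Some by blast
    hence "leM L K \<and> L \<noteq> K" using b unfolding below_def by blast
    thus ?thesis using L by auto
  qed simp
qed

end

context PBWO begin

lemma term_err:
  assumes a: "\<alpha> \<in> exps n" and d: "\<delta> \<in> exps n" and s: "s \<in> R" and c: "c \<in> R"
    and u: "u - s * X \<alpha> \<in> W (deg \<alpha>)"
  shows "u * (c * X \<delta>) - (s * sigma_pow R x n \<alpha> c * cab R x n \<alpha> \<delta>) * X (add_exp \<alpha> \<delta>) \<in> W (deg \<alpha> + deg \<delta>)"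
proof -
  define \<sigma> where "\<sigma> = sigma_pow R x n \<alpha> c"
  define w0 where "w0 = u - s * X \<alpha>"
  define w1 where "w1 = X \<alpha> * c - \<sigma> * X \<alpha>"
  define w2 where "w2 = X \<alpha> * X \<delta> - cab R x n \<alpha> \<delta> * X (add_exp \<alpha> \<delta>)"
  have e1: "u * (c * X \<delta>) = s * \<sigma> * (X \<alpha> * X \<delta>) + s * (w1 * X \<delta>) + w0 * (c * X \<delta>)"
    unfolding w0_def w1_def by (simp add: algebra_simps)
  have e2: "X \<alpha> * X \<delta> = cab R x n \<alpha> \<delta> * X (add_exp \<alpha> \<delta>) + w2" by (simp add: w2_def)
  have eq: "u * (c * X \<delta>) - (s * \<sigma> * cab R x n \<alpha> \<delta>) * X (add_exp \<alpha> \<delta>)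
      = s * \<sigma> * w2 + s * (w1 * X \<delta>) + w0 * (c * X \<delta>)"
    unfolding e1 e2 by (simp add: algebra_simps)
  have sR: "s * \<sigma> \<in> R" using s spR[OF a c] \<sigma>_def by blast
  have m1: "s * \<sigma> * w2 \<in> W (deg \<alpha> + deg \<delta>)" using W_smul[OF sR] L2[OF a d] w2_def by simp
  have m2: "s * (w1 * X \<delta>) \<in> W (deg \<alpha> + deg \<delta>)"
    using W_smul[OF s WV[OF _ X_V[OF d]]] sp_W[OF a c] w1_def \<sigma>_def by simp
  have m3: "w0 * (c * X \<delta>) \<in> W (deg \<alpha> + deg \<delta>)"
    using WV[OF _ V_mon[OF c d order_refl]] u w0_def by simp
  show ?thesis using eq m1 m2 m3 \<sigma>_def by (metis W_add)
qed

abbreviation "Dsum s \<alpha> a \<equiv> (\<Sum>\<delta>\<in>{\<delta>. co a \<delta> \<noteq> 0}. (s * sigma_pow R x n \<alpha> (co a \<delta>) * cab R x n \<alpha> \<delta>) * X (add_exp \<alpha> \<delta>))"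

lemma decomp:
  assumes u: "u - s * X \<alpha> \<in> W (deg \<alpha>)" and s: "s \<in> R" and a: "\<alpha> \<in> exps n" and b: "b \<in> V e"
  shows "u * b - Dsum s \<alpha> b \<in> W (deg \<alpha> + e)"
proof -
  let ?S = "{\<delta>. co b \<delta> \<noteq> 0}"
  have "u * b = (\<Sum>\<delta>\<in>?S. u * (co b \<delta> * X \<delta>))"
    by (subst expand) (simp add: sum_distrib_left)
  hence eq: "u * b - Dsum s \<alpha> b = (\<Sum>\<delta>\<in>?S. u * (co b \<delta> * X \<delta>)
      - (s * sigma_pow R x n \<alpha> (co b \<delta>) * cab R x n \<alpha> \<delta>) * X (add_exp \<alpha> \<delta>))"
    by (simp add: sum_subtractf)
  have "u * (co b \<delta> * X \<delta>) - (s * sigma_pow R x n \<alpha> (co b \<delta>) * cab R x n \<alpha> \<delta>) * X (add_exp \<alpha> \<delta>)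
      \<in> W (deg \<alpha> + e)" if dS: "\<delta> \<in> ?S" for \<delta>
  proof -
    have de: "\<delta> \<in> exps n" using dS co_exps by blast
    have "deg \<delta> \<le> e" using b dS V_coeff by blast
    thus ?thesis using W_mono[OF term_err[OF a de s co_R u]] by simp
  qed
  thus ?thesis unfolding eq by blast
qed

lemma co_Dsum: assumes s: "s \<in> R" and a: "\<alpha> \<in> exps n"
  shows "co (Dsum s \<alpha> b) \<mu> = (\<Sum>\<delta>\<in>{\<delta>. co b \<delta> \<noteq> 0}.
      if add_exp \<alpha> \<delta> = \<mu> then s * sigma_pow R x n \<alpha> (co b \<delta>) * cab R x n \<alpha> \<delta> else 0)"
  unfolding co_sum
proof (rule sum.cong)
  fix \<delta> assume "\<delta> \<in> {\<delta>. co b \<delta> \<noteq> 0}"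
  hence de: "\<delta> \<in> exps n" using co_exps by blast
  have R: "s * sigma_pow R x n \<alpha> (co b \<delta>) * cab R x n \<alpha> \<delta> \<in> R"
    using s spR[OF a co_R] cabR by blast
  show "co ((s * sigma_pow R x n \<alpha> (co b \<delta>) * cab R x n \<alpha> \<delta>) * X (add_exp \<alpha> \<delta>)) \<mu> =
      (if add_exp \<alpha> \<delta> = \<mu> then s * sigma_pow R x n \<alpha> (co b \<delta>) * cab R x n \<alpha> \<delta> else 0)"
    using co_mon[OF R add_exps[OF a de]] by auto
qed simp

lemma vec_V: assumes g: "vec_in m g" and gi: "(\<gamma>, i) \<in> MM" and bd: "\<forall>L\<in>vs g. leM L (\<gamma>, i)"
  shows "g j \<in> V (deg \<gamma>)"
  unfolding V_def
proof (intro CollectI allI impI)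
  fix \<delta> assume nz: "co (g j) \<delta> \<noteq> 0"
  have jm: "j < m"
  proof (rule ccontr)
    assume "\<not> j < m" hence "g j = 0" using g by (simp add: vec_in_def)
    thus False using nz by simp
  qed
  hence mem: "(\<delta>, j) \<in> vs g" using nz by (simp add: vs_mem)
  thus "deg \<delta> \<le> deg \<gamma>" using leM_deg[OF _ gi] bd vs_M by blast
qed

lemma VL:
  assumes u: "u - s * X \<alpha> \<in> W (deg \<alpha>)" and s: "s \<in> R" and a: "\<alpha> \<in> exps n"
    and g: "vec_in m g" and gi: "(\<gamma>, i) \<in> MM" and bd: "\<forall>L\<in>vs g. leM L (\<gamma>, i)"
  shows "\<forall>L\<in>vs (\<lambda>j. u * g j). leM L (add_exp \<alpha> \<gamma>, i)"
    and "co (u * g i) (add_exp \<alpha> \<gamma>) = s * sigma_pow R x n \<alpha> (co (g i) \<gamma>) * cab R x n \<alpha> \<gamma>"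
proof -
  have ge: "\<gamma> \<in> exps n" and im: "i < m" using gi by auto
  have aM: "(add_exp \<alpha> \<gamma>, i) \<in> MM" using add_exps[OF a ge] im by simp
  define E where "E j = u * g j - Dsum s \<alpha> (g j)" for j
  have EW: "E j \<in> W (deg \<alpha> + deg \<gamma>)" for j
    unfolding E_def by (rule decomp[OF u s a vec_V[OF g gi bd]])
  have cof: "co (u * g j) \<mu> = (\<Sum>\<delta>\<in>{\<delta>. co (g j) \<delta> \<noteq> 0}.
      if add_exp \<alpha> \<delta> = \<mu> then s * sigma_pow R x n \<alpha> (co (g j) \<delta>) * cab R x n \<alpha> \<delta> else 0) + co (E j) \<mu>" for j \<mu>
  proof -
    have "u * g j = Dsum s \<alpha> (g j) + E j" by (simp add: E_def)
    thus ?thesis by (simp add: co_add co_Dsum[OF s a])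
  qed
  show "\<forall>L\<in>vs (\<lambda>j. u * g j). leM L (add_exp \<alpha> \<gamma>, i)"
  proof
    fix L assume L: "L \<in> vs (\<lambda>j. u * g j)"
    obtain \<mu> j where Lp: "L = (\<mu>, j)" by (cases L)
    have jm: "j < m" and nz: "co (u * g j) \<mu> \<noteq> 0" using L Lp by (auto simp: vs_mem)
    have me: "\<mu> \<in> exps n" using nz co_exps by blast
    show "leM L (add_exp \<alpha> \<gamma>, i)"
    proof (cases "(\<Sum>\<delta>\<in>{\<delta>. co (g j) \<delta> \<noteq> 0}.
      if add_exp \<alpha> \<delta> = \<mu> then s * sigma_pow R x n \<alpha> (co (g j) \<delta>) * cab R x n \<alpha> \<delta> else 0) = 0")
      case True
      hence "co (E j) \<mu> \<noteq> 0" using nz cof by simp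
      hence "deg \<mu> < deg \<alpha> + deg \<gamma>" using EW by (auto simp: W_def)
      hence "deg \<mu> < deg (add_exp \<alpha> \<gamma>)" by (simp add: deg_add)
      thus ?thesis using M_deg[OF me add_exps[OF a ge] jm im] Lp by simp
    next
      case False
      let ?h = "\<lambda>\<delta>. if add_exp \<alpha> \<delta> = \<mu> then s * sigma_pow R x n \<alpha> (co (g j) \<delta>) * cab R x n \<alpha> \<delta> else 0"
      have "\<exists>\<delta>\<in>{\<delta>. co (g j) \<delta> \<noteq> 0}. ?h \<delta> \<noteq> 0"
      proof (rule ccontr)
        assume "\<not> (\<exists>\<delta>\<in>{\<delta>. co (g j) \<delta> \<noteq> 0}. ?h \<delta> \<noteq> 0)"
        hence "\<forall>\<delta>\<in>{\<delta>. co (g j) \<delta> \<noteq> 0}. ?h \<delta> = 0" by blast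
        hence "sum ?h {\<delta>. co (g j) \<delta> \<noteq> 0} = 0" by (rule sum.neutral)
        thus False using False by simp
      qed
      then obtain \<delta> where \<delta>0: "co (g j) \<delta> \<noteq> 0" "?h \<delta> \<noteq> 0" by blast
      hence \<delta>: "co (g j) \<delta> \<noteq> 0" "add_exp \<alpha> \<delta> = \<mu>" by (auto split: if_splits)
      have dm: "(\<delta>, j) \<in> vs g" using \<delta> jm by (simp add: vs_mem)
      have de: "\<delta> \<in> exps n" using \<delta> co_exps by blast
      have "leM (\<delta>, j) (\<gamma>, i)" using bd dm by blast
      thus ?thesis using M_mono[OF a de ge im jm] \<delta>(2) Lp by simp
    qed
  qed
  have E0: "co (E i) (add_exp \<alpha> \<gamma>) = 0" using W_coeff[OF EW] by (simp add: deg_add)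
  let ?f = "\<lambda>\<delta>. s * sigma_pow R x n \<alpha> (co (g i) \<delta>) * cab R x n \<alpha> \<delta>"
  have "(\<Sum>\<delta>\<in>{\<delta>. co (g i) \<delta> \<noteq> 0}. if add_exp \<alpha> \<delta> = add_exp \<alpha> \<gamma> then ?f \<delta> else 0)
      = (\<Sum>\<delta>\<in>{\<delta>. co (g i) \<delta> \<noteq> 0}. if \<delta> = \<gamma> then ?f \<delta> else 0)"
    by (simp add: add_cancel)
  also have "\<dots> = (if \<gamma> \<in> {\<delta>. co (g i) \<delta> \<noteq> 0} then ?f \<gamma> else 0)"
    by (rule sum.delta) simp
  also have "\<dots> = ?f \<gamma>" using sp_0[OF a] by auto
  finally show "co (u * g i) (add_exp \<alpha> \<gamma>) = s * sigma_pow R x n \<alpha> (co (g i) \<gamma>) * cab R x n \<alpha> \<gamma>"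
    using cof[of i "add_exp \<alpha> \<gamma>"] E0 by simp
qed

lemma below_le: "below K v \<Longrightarrow> \<forall>L\<in>vs v. leM L K" by (simp add: below_def)

lemma VL_below:
  assumes u: "u - s * X \<alpha> \<in> W (deg \<alpha>)" and s: "s \<in> R" and a: "\<alpha> \<in> exps n"
    and g: "vec_in m g" and gi: "(\<gamma>, i) \<in> MM" and bd: "below (\<gamma>, i) g"
  shows "below (add_exp \<alpha> \<gamma>, i) (\<lambda>j. u * g j)"
proof -
  have l: "\<forall>L\<in>vs (\<lambda>j. u * g j). leM L (add_exp \<alpha> \<gamma>, i)" using VL(1)[OF u s a g gi below_le[OF bd]] .
  have "(\<gamma>, i) \<notin> vs g" using bd by (auto simp: below_def)
  hence "co (g i) \<gamma> = 0" using gi by (auto simp: vs_mem)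
  hence "co (u * g i) (add_exp \<alpha> \<gamma>) = 0" using VL(2)[OF u s a g gi below_le[OF bd]] sp_0[OF a] by simp
  hence "(add_exp \<alpha> \<gamma>, i) \<notin> vs (\<lambda>j. u * g j)" by (simp add: vs_mem)
  thus ?thesis using l by (auto simp: below_def)
qed

lemma W_below: assumes u: "u \<in> W d" and gV: "\<forall>j. g j \<in> V e" and K: "(\<kappa>, i) \<in> MM"
  and de: "d + e \<le> deg \<kappa>"
  shows "below (\<kappa>, i) (\<lambda>j. u * g j)"
  unfolding below_def
proof
  fix L assume L: "L \<in> vs (\<lambda>j. u * g j)"
  obtain \<mu> j where Lp: "L = (\<mu>, j)" by (cases L)
  have jm: "j < m" and nz: "co (u * g j) \<mu> \<noteq> 0" using L Lp by (auto simp: vs_mem)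
  have me: "\<mu> \<in> exps n" using nz co_exps by blast
  have "u * g j \<in> W (d + e)" using WV[OF u] gV by blast
  hence "deg \<mu> < d + e" using nz by (auto simp: W_def)
  hence lt: "deg \<mu> < deg \<kappa>" using de by simp
  have "leM (\<mu>, j) (\<kappa>, i)" using M_deg[OF me _ jm _ lt] K by auto
  moreover have "(\<mu>, j) \<noteq> (\<kappa>, i)" using lt by auto
  ultimately show "leM L (\<kappa>, i) \<and> L \<noteq> (\<kappa>, i)" using Lp by simp
qed

lemma vs_add: "vs (\<lambda>j. a j + b j) \<subseteq> vs a \<union> vs b"
  by (auto simp: vs_mem co_add)
lemma vs_diff: "vs (\<lambda>j. a j - b j) \<subseteq> vs a \<union> vs b"
  by (auto simp: vs_mem co_diff)
lemma vs_sum: "vs (\<lambda>j. \<Sum>k\<in>I. f k j) \<subseteq> (\<Union>k\<in>I. vs (f k))"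
proof
  fix L assume L: "L \<in> vs (\<lambda>j. \<Sum>k\<in>I. f k j)"
  obtain \<mu> j where Lp: "L = (\<mu>, j)" by (cases L)
  have "j < m" "(\<Sum>k\<in>I. co (f k j) \<mu>) \<noteq> 0" using L Lp by (auto simp: vs_mem co_sum)
  then obtain k where "k \<in> I" "co (f k j) \<mu> \<noteq> 0"
    using sum.neutral[of I "\<lambda>k. co (f k j) \<mu>"] by blast
  thus "L \<in> (\<Union>k\<in>I. vs (f k))" using \<open>j < m\<close> Lp by (auto simp: vs_mem)
qed

lemma below_add: "below K a \<Longrightarrow> below K b \<Longrightarrow> below K (\<lambda>j. a j + b j)"
  using vs_add unfolding below_def by blast
lemma below_diff: "below K a \<Longrightarrow> below K b \<Longrightarrow> below K (\<lambda>j. a j - b j)"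
  using vs_diff unfolding below_def by blast
lemma below_sum: "(\<And>k. k \<in> I \<Longrightarrow> below K (f k)) \<Longrightarrow> below K (\<lambda>j. \<Sum>k\<in>I. f k j)"
  using vs_sum unfolding below_def by blast

end

context PBWO begin

abbreviation "red F \<equiv> red1 R x n m leM F"
abbreviation "lc \<equiv> lcv R x n m leM"

lemma red1_E:
  assumes r: "red F f h" and f0: "f \<noteq> (\<lambda>_. 0)" and lf: "lm f = Some (\<beta>, i)"
  shows "\<exists>(t::nat) g r a. (\<forall>k<t. g k \<in> F \<and> r k \<in> R \<and> a k \<in> exps n \<and>
          lm (g k) = Some (fst (the (lm (g k))), i) \<and> add_exp (a k) (fst (the (lm (g k)))) = \<beta>)
     \<and> lc f = (\<Sum>k<t. r k * sigma_pow R x n (a k) (lc (g k)) * cab R x n (a k) (fst (the (lm (g k)))))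
     \<and> h = (\<lambda>i. f i - (\<Sum>k<t. r k * X (a k) * g k i))"
proof -
  obtain t :: nat and g r a where A: "\<forall>k<t. g k \<in> F \<and> r k \<in> R \<and> a k \<in> exps n \<and>
           (case (lm f, lm (g k)) of
              (Some (bb, ii), Some (gg, jj)) \<Rightarrow> jj = ii \<and> add_exp (a k) gg = bb
            | _ \<Rightarrow> False)"
    and B: "lc f = (\<Sum>k<t. r k * sigma_pow R x n (a k) (lc (g k)) * cab R x n (a k) (fst (the (lm (g k)))))"
    and C: "h = (\<lambda>i. f i - (\<Sum>k<t. r k * X (a k) * g k i))"
  proof -
    from r[unfolded red1_def] f0 have "\<exists>(t::nat) g r a. (\<forall>k<t. g k \<in> F \<and> r k \<in> R \<and> a k \<in> exps n \<and>
           (case (lm f, lm (g k)) of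
              (Some (bb, ii), Some (gg, jj)) \<Rightarrow> jj = ii \<and> add_exp (a k) gg = bb
            | _ \<Rightarrow> False)) \<and>
     lc f = (\<Sum>k<t. r k * sigma_pow R x n (a k) (lc (g k)) * cab R x n (a k) (fst (the (lm (g k))))) \<and>
     h = (\<lambda>i. f i - (\<Sum>k<t. r k * X (a k) * g k i))" by (elim disjE conjE; (assumption | simp))
    thus ?thesis by (elim exE conjE) (rule that; assumption)
  qed
  have "lm (g k) = Some (fst (the (lm (g k))), i) \<and> add_exp (a k) (fst (the (lm (g k)))) = \<beta>"
    if k: "k < t" for k
  proof -
    have c: "case (lm f, lm (g k)) of (Some (bb, ii), Some (gg, jj)) \<Rightarrow> jj = ii \<and> add_exp (a k) gg = bb
            | _ \<Rightarrow> False" using A k by blast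
    show ?thesis
    proof (cases "lm (g k)")
      case None then show ?thesis using c lf by simp
    next
      case (Some G) then show ?thesis using c lf by (cases G) auto
    qed
  qed
  thus ?thesis using A B C by blast
qed

lemma red1_I:
  assumes f0: "f \<noteq> (\<lambda>_. 0)" and lf: "lm f = Some (\<beta>, i)"
    and A: "\<forall>k<(t::nat). g k \<in> F \<and> r k \<in> R \<and> a k \<in> exps n \<and> lm (g k) = Some (\<gamma> k, i) \<and> add_exp (a k) (\<gamma> k) = \<beta>"
    and B: "lc f = (\<Sum>k<t. r k * sigma_pow R x n (a k) (lc (g k)) * cab R x n (a k) (\<gamma> k))"
    and C: "h = (\<lambda>i. f i - (\<Sum>k<t. r k * X (a k) * g k i))"
  shows "red F f h"
proof -
  have A': "\<forall>k<t. g k \<in> F \<and> r k \<in> R \<and> a k \<in> exps n \<and>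
           (case (lm f, lm (g k)) of
              (Some (bb, ii), Some (gg, jj)) \<Rightarrow> jj = ii \<and> add_exp (a k) gg = bb
            | _ \<Rightarrow> False)" using A lf by auto
  have B': "lc f = (\<Sum>k<t. r k * sigma_pow R x n (a k) (lc (g k)) * cab R x n (a k) (fst (the (lm (g k)))))"
    using B A by simp
  show ?thesis unfolding red1_def
    apply (rule disjI2)
    apply (rule conjI[OF f0])
    apply (rule exI[of _ t], rule exI[of _ g], rule exI[of _ r], rule exI[of _ a])
    by (intro conjI A' B' C)
qed

lemma red1_zero: "red F (\<lambda>_. 0) (\<lambda>_. 0)" by (simp add: red1_def)

lemma red1_from0: "red F (\<lambda>_. 0) h \<Longrightarrow> h = (\<lambda>_. 0)" by (simp add: red1_def)

lemma red1_vec: assumes Fv: "\<forall>g\<in>F. vec_in m g \<and> g \<noteq> (\<lambda>_. 0)" and f: "vec_in m f" and r: "red F f h"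
  shows "vec_in m h"
proof (cases "f = (\<lambda>_. 0)")
  case True
  have "h = (\<lambda>_. 0)" using red1_from0[of F h] r True by simp
  thus ?thesis by (simp add: vec_in_def)
next
  case False
  then obtain K where lf: "lm f = Some K" using lmv_None[OF f] by (cases "lm f") auto
  obtain \<beta> i where K: "K = (\<beta>, i)" by (cases K)
  obtain t :: nat and g r a where A: "\<forall>k<t. g k \<in> F" and C: "h = (\<lambda>i. f i - (\<Sum>k<t. r k * X (a k) * g k i))"
    using red1_E[OF r False lf[unfolded K]] by blast
  show ?thesis unfolding vec_in_def C
  proof (intro allI impI)
    fix j assume j: "m \<le> j"
    have "f j = 0" using f j by (simp add: vec_in_def)
    moreover have "g k j = 0" if "k < t" for k using A Fv that j by (simp add: vec_in_def)
    ultimately show "f j - (\<Sum>k<t. r k * X (a k) * g k j) = 0" by simp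
  qed
qed

lemma lm_add: assumes a: "vec_in m a" and b: "vec_in m b" and la: "lm a = Some (\<alpha>, i)"
  and bb: "below (\<alpha>, i) b"
  shows "lm (\<lambda>j. a j + b j) = Some (\<alpha>, i)" and "co (a i + b i) \<alpha> = co (a i) \<alpha>"
    and "(\<lambda>j. a j + b j) \<noteq> (\<lambda>_. 0)"
proof -
  have Ka: "(\<alpha>, i) \<in> vs a" "\<forall>L\<in>vs a. leM L (\<alpha>, i)" using lmv_Some[OF la] by auto
  have nb: "(\<alpha>, i) \<notin> vs b" using bb by (auto simp: below_def)
  have im: "i < m" using Ka by (simp add: vs_mem)
  show c: "co (a i + b i) \<alpha> = co (a i) \<alpha>" using nb im by (simp add: vs_mem co_add)
  have mem: "(\<alpha>, i) \<in> vs (\<lambda>j. a j + b j)" using Ka(1) c by (simp add: vs_mem)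
  have "\<forall>L\<in>vs (\<lambda>j. a j + b j). leM L (\<alpha>, i)" using vs_add Ka(2) bb unfolding below_def by blast
  thus "lm (\<lambda>j. a j + b j) = Some (\<alpha>, i)" using mem by (rule lmv_eq[rotated])
  show "(\<lambda>j. a j + b j) \<noteq> (\<lambda>_. 0)"
  proof
    assume e: "(\<lambda>j. a j + b j) = (\<lambda>_. 0)"
    have "a i + b i = 0" using fun_cong[OF e, of i] by simp
    thus False using mem by (simp add: vs_mem)
  qed
qed

lemma vec_add: "vec_in m a \<Longrightarrow> vec_in m b \<Longrightarrow> vec_in m (\<lambda>j. a j + b j)" by (simp add: vec_in_def)
lemma vec_xv: "vec_in m a \<Longrightarrow> vec_in m (xv x n \<theta> a)" by (simp add: vec_in_def xv_def)

lemma cond_below: "vec_in m v \<Longrightarrow> lm a = Some K \<Longrightarrow> (v = (\<lambda>_. 0) \<or> mgt leM (lm a) (lm v)) \<longleftrightarrow> below K v"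
  using below_iff lmv_M by simp

lemma lm_add_eq: assumes a: "vec_in m a" and b: "vec_in m b" and c: "b = (\<lambda>_. 0) \<or> mgt leM (lm a) (lm b)"
  shows "lm (\<lambda>j. a j + b j) = lm a"
proof (cases "b = (\<lambda>_. 0)")
  case True then show ?thesis by simp
next
  case False
  then obtain K where K: "lm a = Some K" using c by (cases "lm a") auto
  obtain \<alpha> i where Kp: "K = (\<alpha>, i)" by (cases K)
  have "below K b" using cond_below[OF b K] c by simp
  thus ?thesis using lm_add(1)[OF a b K[unfolded Kp]] K Kp by simp
qed

lemma cond_add: assumes a: "vec_in m a" and b: "vec_in m b" and c: "vec_in m c"
  and cb: "b = (\<lambda>_. 0) \<or> mgt leM (lm a) (lm b)" and cc: "c = (\<lambda>_. 0) \<or> mgt leM (lm a) (lm c)"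
  shows "(\<lambda>j. b j + c j) = (\<lambda>_. 0) \<or> mgt leM (lm a) (lm (\<lambda>j. b j + c j))"
proof (cases "lm a")
  case None then show ?thesis using cb cc by auto
next
  case (Some K)
  have "below K b" "below K c" using cond_below[OF b Some] cond_below[OF c Some] cb cc by auto
  hence "below K (\<lambda>j. b j + c j)" by (rule below_add)
  thus ?thesis using cond_below[OF vec_add[OF b c] Some] by simp
qed

lemma cond_trans: assumes y: "vec_in m y" and h: "vec_in m h" and p: "vec_in m p"
  and c1: "h = (\<lambda>_. 0) \<or> mgt leM (lm y) (lm h)" and c2: "p = (\<lambda>_. 0) \<or> mgt leM (lm h) (lm p)"
  shows "p = (\<lambda>_. 0) \<or> mgt leM (lm y) (lm p)"
proof (cases "p = (\<lambda>_. 0)")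
  case False
  then obtain Kh where Kh: "lm h = Some Kh" using c2 by (cases "lm h") auto
  hence h0: "h \<noteq> (\<lambda>_. 0)" using lmv_None[OF h] by auto
  then obtain Ky where Ky: "lm y = Some Ky" using c1 by (cases "lm y") auto
  have bh: "below Kh p" using cond_below[OF p Kh] c2 by simp
  have by': "below Ky h" using cond_below[OF h Ky] c1 by simp
  have KhM: "Kh \<in> MM" and KyM: "Ky \<in> MM" using lmv_M Kh Ky by auto
  have hy: "leM Kh Ky" "Kh \<noteq> Ky" using by' lmv_Some[OF Kh] unfolding below_def by auto
  have "below Ky p" unfolding below_def
  proof
    fix L assume L: "L \<in> vs p"
    have LM: "L \<in> MM" using L vs_M by blast
    have "leM L Kh" "L \<noteq> Kh" using bh L unfolding below_def by auto
    moreover hence "leM L Ky" using M_trans[OF LM KhM KyM] hy by blast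
    moreover have "L \<noteq> Ky" using M_antisym[OF KhM KyM] hy \<open>leM L Kh\<close> by blast
    ultimately show "leM L Ky \<and> L \<noteq> Ky" by blast
  qed
  thus ?thesis using cond_below[OF p Ky] by simp
qed simp

lemma red_shift:
  assumes f: "vec_in m f" and p: "vec_in m p" and r: "red F f h"
    and c: "p = (\<lambda>_. 0) \<or> mgt leM (lm f) (lm p)"
  shows "red F (\<lambda>j. f j + p j) (\<lambda>j. h j + p j)"
proof (cases "p = (\<lambda>_. 0)")
  case True then show ?thesis using r by simp
next
  case False
  then obtain K where K: "lm f = Some K" using c by (cases "lm f") auto
  obtain \<beta> i where Kp: "K = (\<beta>, i)" by (cases K)
  have f0: "f \<noteq> (\<lambda>_. 0)" using K lmv_None[OF f] by auto
  have bp: "below K p" using cond_below[OF p K] c by simp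
  note L = lm_add[OF f p K[unfolded Kp] bp[unfolded Kp]]
  obtain t :: nat and g r a where A: "\<forall>k<t. g k \<in> F \<and> r k \<in> R \<and> a k \<in> exps n \<and>
          lm (g k) = Some (fst (the (lm (g k))), i) \<and> add_exp (a k) (fst (the (lm (g k)))) = \<beta>"
     and B: "lc f = (\<Sum>k<t. r k * sigma_pow R x n (a k) (lc (g k)) * cab R x n (a k) (fst (the (lm (g k)))))"
     and C: "h = (\<lambda>i. f i - (\<Sum>k<t. r k * X (a k) * g k i))"
    using red1_E[OF r f0 K[unfolded Kp]] by blast
  have lc: "lc (\<lambda>j. f j + p j) = lc f" using L(1,2) lcv_eq K Kp by simp
  show ?thesis
    by (rule red1_I[OF L(3) L(1) A]) (use B lc C in auto)
qed

end

context PBWO begin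

lemma add_exp_assoc: "add_exp (add_exp a b) c = add_exp a (add_exp b c)"
  by (simp add: add_exp_def add.assoc)

lemma xv_eq: "xv x n \<theta> f = (\<lambda>j. X \<theta> * f j)" by (simp add: xv_def)

lemma red_main:
  assumes Fv: "\<forall>g\<in>F. vec_in m g \<and> g \<noteq> (\<lambda>_. 0)" and f: "vec_in m f" and th: "\<theta> \<in> exps n"
    and rd: "red F f h"
  shows "\<exists>p. vec_in m p \<and> (p = (\<lambda>_. 0) \<or> mgt leM (lm (xv x n \<theta> f)) (lm p))
     \<and> red F (\<lambda>i. xv x n \<theta> f i + p i) (xv x n \<theta> h)
     \<and> (quasi_comm R x n \<longrightarrow> p = (\<lambda>_. 0))
     \<and> (xv x n \<theta> h = (\<lambda>_. 0) \<or> mgt leM (lm (xv x n \<theta> f)) (lm (xv x n \<theta> h)))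
     \<and> (h = (\<lambda>_. 0) \<or> mgt leM (lm f) (lm h))"
proof (cases "f = (\<lambda>_. 0)")
  case True
  hence h0: "h = (\<lambda>_. 0)" using red1_from0[of F h] rd by simp
  have "xv x n \<theta> f = (\<lambda>_. 0)" "xv x n \<theta> h = (\<lambda>_. 0)" using True h0 by (auto simp: xv_def)
  thus ?thesis using h0 red1_zero[of F] by (intro exI[of _ "\<lambda>_. 0"]) (simp add: vec_in_def)
next
  case False
  have hv: "vec_in m h" using red1_vec[OF Fv f rd] .
  obtain K where lf0: "lm f = Some K" using lmv_None[OF f] False by (cases "lm f") auto
  obtain \<beta> i where Kp: "K = (\<beta>, i)" by (cases K)
  have lf: "lm f = Some (\<beta>, i)" using lf0 Kp by simp
  obtain t :: nat and g r a where A: "\<forall>k<t. g k \<in> F \<and> r k \<in> R \<and> a k \<in> exps n \<and>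
          lm (g k) = Some (fst (the (lm (g k))), i) \<and> add_exp (a k) (fst (the (lm (g k)))) = \<beta>"
     and B: "lc f = (\<Sum>k<t. r k * sigma_pow R x n (a k) (lc (g k)) * cab R x n (a k) (fst (the (lm (g k)))))"
     and C: "h = (\<lambda>i. f i - (\<Sum>k<t. r k * X (a k) * g k i))"
    using red1_E[OF rd False lf] by blast
  define \<gamma> where "\<gamma> k = fst (the (lm (g k)))" for k
  have gF: "g k \<in> F" and rR: "r k \<in> R" and aE: "a k \<in> exps n" and lmg: "lm (g k) = Some (\<gamma> k, i)"
    and sm: "add_exp (a k) (\<gamma> k) = \<beta>" if "k < t" for k using A that \<gamma>_def by auto
  have gv: "vec_in m (g k)" if "k < t" for k using Fv gF[OF that] by blast
  have gM: "(\<gamma> k, i) \<in> MM" if "k < t" for k using lmv_M[OF lmg[OF that]] .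
  have gle: "\<forall>L\<in>vs (g k). leM L (\<gamma> k, i)" if "k < t" for k using lmv_Some[OF lmg[OF that]] by blast
  have lcg: "lc (g k) = co (g k i) (\<gamma> k)" if "k < t" for k using lcv_eq[OF lmg[OF that]] .
  have fM: "(\<beta>, i) \<in> MM" using lmv_M[OF lf] .
  hence be: "\<beta> \<in> exps n" and im: "i < m" by auto
  have fle: "\<forall>L\<in>vs f. leM L (\<beta>, i)" using lmv_Some[OF lf] by blast
  have fnz: "co (f i) \<beta> \<noteq> 0" using lmv_Some[OF lf] by (simp add: vs_mem)
  have lcf: "lc f = co (f i) \<beta>" using lcv_eq[OF lf] .
  have W0: "u - s * X \<alpha> \<in> W (deg \<alpha>)" if "u = s * X \<alpha>" for u s \<alpha> using that by simp
  have VLk1: "\<forall>L\<in>vs (\<lambda>j. r k * X (a k) * g k j). leM L (\<beta>, i)" if k: "k < t" for k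
    using VL(1)[OF W0[OF refl] rR[OF k] aE[OF k] gv[OF k] gM[OF k] gle[OF k]] sm[OF k] by simp
  have VLk2: "co (r k * X (a k) * g k i) \<beta> = r k * sigma_pow R x n (a k) (lc (g k)) * cab R x n (a k) (\<gamma> k)"
    if k: "k < t" for k
    using VL(2)[OF W0[OF refl] rR[OF k] aE[OF k] gv[OF k] gM[OF k] gle[OF k]] sm[OF k] lcg[OF k] by simp
  have hb: "below (\<beta>, i) h"
  proof -
    have l: "\<forall>L\<in>vs h. leM L (\<beta>, i)"
    proof
      fix L assume L: "L \<in> vs h"
      hence "L \<in> vs (\<lambda>j. f j - (\<Sum>k<t. r k * X (a k) * g k j))" using C by simp
      hence "L \<in> vs f \<union> vs (\<lambda>j. \<Sum>k<t. r k * X (a k) * g k j)" by (rule subsetD[OF vs_diff])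
      hence "L \<in> vs f \<union> (\<Union>k\<in>{..<t}. vs (\<lambda>j. r k * X (a k) * g k j))"
        using vs_sum[of "\<lambda>k j. r k * X (a k) * g k j" "{..<t}"] by blast
      thus "leM L (\<beta>, i)" using fle VLk1 by blast
    qed
    have "co (h i) \<beta> = lc f - (\<Sum>k<t. co (r k * X (a k) * g k i) \<beta>)"
      using C lcf by (simp add: co_diff co_sum)
    also have "\<dots> = 0" using B VLk2 \<gamma>_def by simp
    finally have "(\<beta>, i) \<notin> vs h" by (simp add: vs_mem)
    thus ?thesis using l unfolding below_def by blast
  qed
  have hcond: "h = (\<lambda>_. 0) \<or> mgt leM (lm f) (lm h)" using cond_below[OF hv lf] hb by simp
  define Kf where "Kf = (add_exp \<theta> \<beta>, i)"
  have KfM: "Kf \<in> MM" using add_exps[OF th be] im Kf_def by simp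
  have xf1: "\<forall>L\<in>vs (\<lambda>j. X \<theta> * f j). leM L Kf"
    using VL(1)[OF W0[of _ 1] R1 th f fM fle] Kf_def by simp
  have xf2: "co (X \<theta> * f i) (add_exp \<theta> \<beta>) = sigma_pow R x n \<theta> (co (f i) \<beta>) * cab R x n \<theta> \<beta>"
    using VL(2)[OF W0[of _ 1] R1 th f fM fle] by simp
  have xfnz: "co (X \<theta> * f i) (add_exp \<theta> \<beta>) \<noteq> 0"
    unfolding xf2 by (rule unit_mult_nz[OF th be sp_nz[OF th co_R fnz]])
  have lxf: "lm (xv x n \<theta> f) = Some Kf"
    unfolding xv_eq using xf1 xfnz im Kf_def by (intro lmv_eq) (auto simp: vs_mem)
  have xhb: "below Kf (xv x n \<theta> h)"
    unfolding xv_eq Kf_def by (rule VL_below[OF W0[of _ 1] R1 th hv fM hb]) simp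
  have xhcond: "xv x n \<theta> h = (\<lambda>_. 0) \<or> mgt leM (lm (xv x n \<theta> f)) (lm (xv x n \<theta> h))"
    using cond_below[OF vec_xv[OF hv] lxf] xhb by simp
  define r' where "r' k = sigma_pow R x n \<theta> (r k) * cab R x n \<theta> (a k)" for k
  define a' where "a' k = add_exp \<theta> (a k)" for k
  define uk where "uk k = r' k * X (a' k) - X \<theta> * (r k * X (a k))" for k
  define p where "p = (\<lambda>j. \<Sum>k<t. uk k * g k j)"
  have r'R: "r' k \<in> R" if "k < t" for k unfolding r'_def using spR[OF th rR[OF that]] cabR by (rule Rmult)
  have a'E: "a' k \<in> exps n" if "k < t" for k using add_exps[OF th aE[OF that]] a'_def by simp
  have ukW: "uk k \<in> W (deg \<theta> + deg (a k))" if k: "k < t" for k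
  proof -
    define \<sigma> where "\<sigma> = sigma_pow R x n \<theta> (r k)"
    define w1 where "w1 = X \<theta> * r k - \<sigma> * X \<theta>"
    define w2 where "w2 = X \<theta> * X (a k) - cab R x n \<theta> (a k) * X (a' k)"
    have e: "X \<theta> * (r k * X (a k)) = r' k * X (a' k) + (\<sigma> * w2 + w1 * X (a k))"
      unfolding w1_def w2_def r'_def \<sigma>_def by (simp add: algebra_simps)
    have "uk k = 0 - (\<sigma> * w2 + w1 * X (a k))" unfolding uk_def e by simp
    moreover have "\<sigma> * w2 \<in> W (deg \<theta> + deg (a k))"
      using W_smul[OF spR[OF th rR[OF k]] L2[OF th aE[OF k]]] w2_def \<sigma>_def a'_def by simp
    moreover have "w1 * X (a k) \<in> W (deg \<theta> + deg (a k))"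
      using WV[OF sp_W[OF th rR[OF k]] X_V[OF aE[OF k]]] w1_def \<sigma>_def by simp
    ultimately show ?thesis by (metis W_0 W_add W_diff)
  qed
  have pv: "vec_in m p" unfolding p_def vec_in_def using gv by (simp add: vec_in_def)
  have pb: "below Kf p"
    unfolding p_def
  proof (rule below_sum)
    fix k assume "k \<in> {..<t}"
    hence k: "k < t" by simp
    have dd: "deg \<theta> + deg (a k) + deg (\<gamma> k) \<le> deg (add_exp \<theta> \<beta>)"
      using sm[OF k] by (simp add: deg_add[symmetric] add_exp_assoc)
    show "below Kf (\<lambda>j. uk k * g k j)"
      unfolding Kf_def using W_below[OF ukW[OF k] _ _ dd] vec_V[OF gv[OF k] gM[OF k] gle[OF k]] KfM Kf_def by blast
  qed
  have pcond: "p = (\<lambda>_. 0) \<or> mgt leM (lm (xv x n \<theta> f)) (lm p)" using cond_below[OF pv lxf] pb by simp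
  have pq: "quasi_comm R x n \<longrightarrow> p = (\<lambda>_. 0)"
  proof
    assume q: "quasi_comm R x n"
    have "uk k = 0" if k: "k < t" for k
    proof -
      have "X \<theta> * (r k * X (a k)) = (X \<theta> * r k) * X (a k)" by (simp add: mult.assoc)
      also have "\<dots> = sigma_pow R x n \<theta> (r k) * (X \<theta> * X (a k))"
        using QL1[OF q th] rR[OF k] by (simp add: mult.assoc)
      also have "\<dots> = r' k * X (a' k)"
        using QL2[OF q th aE[OF k]] by (simp add: r'_def a'_def mult.assoc)
      finally show ?thesis by (simp add: uk_def)
    qed
    thus "p = (\<lambda>_. 0)" unfolding p_def by simp
  qed
  define F' where "F' = (\<lambda>j. xv x n \<theta> f j + p j)"
  note LA = lm_add[OF vec_xv[OF f] pv lxf[unfolded Kf_def] pb[unfolded Kf_def]]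
  have lF: "lm F' = Some (add_exp \<theta> \<beta>, i)" using LA(1) F'_def by simp
  have F0: "F' \<noteq> (\<lambda>_. 0)" using LA(3) F'_def by simp
  have E: "xv x n \<theta> h = (\<lambda>j. F' j - (\<Sum>k<t. r' k * X (a' k) * g k j))"
  proof
    fix j
    let ?S1 = "\<Sum>k<t. r' k * X (a' k) * g k j"
    let ?S2 = "\<Sum>k<t. X \<theta> * (r k * X (a k)) * g k j"
    have s1: "X \<theta> * (\<Sum>k<t. r k * X (a k) * g k j) = ?S2"
      by (simp add: sum_distrib_left mult.assoc)
    have s2: "p j = ?S1 - ?S2" unfolding p_def uk_def by (simp add: left_diff_distrib sum_subtractf)
    have "xv x n \<theta> h j = X \<theta> * f j - ?S2" using C s1 by (simp add: xv_def right_diff_distrib)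
    also have "\<dots> = F' j - ?S1" using s2 by (simp add: F'_def xv_def)
    finally show "xv x n \<theta> h j = F' j - ?S1" .
  qed
  have VLp: "co (r' k * X (a' k) * g k i) (add_exp \<theta> \<beta>) = r' k * sigma_pow R x n (a' k) (lc (g k)) * cab R x n (a' k) (\<gamma> k)"
    if k: "k < t" for k
  proof -
    have "add_exp (a' k) (\<gamma> k) = add_exp \<theta> \<beta>" using sm[OF k] by (simp add: a'_def add_exp_assoc)
    thus ?thesis
      using VL(2)[OF W0[OF refl] r'R[OF k] a'E[OF k] gv[OF k] gM[OF k] gle[OF k]] lcg[OF k] by simp
  qed
  have "co (xv x n \<theta> h i) (add_exp \<theta> \<beta>) = 0"
    using xhb im unfolding Kf_def below_def by (auto simp: vs_mem)
  hence "co (F' i) (add_exp \<theta> \<beta>) = (\<Sum>k<t. co (r' k * X (a' k) * g k i) (add_exp \<theta> \<beta>))"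
    using fun_cong[OF E, of i] by (simp add: co_diff co_sum)
  hence lcF: "lc F' = (\<Sum>k<t. r' k * sigma_pow R x n (a' k) (lc (g k)) * cab R x n (a' k) (\<gamma> k))"
    using VLp lcv_eq[OF lF] by simp
  have rd': "red F F' (xv x n \<theta> h)"
  proof (rule red1_I[OF F0 lF _ lcF E])
    show "\<forall>k<t. g k \<in> F \<and> r' k \<in> R \<and> a' k \<in> exps n \<and> lm (g k) = Some (\<gamma> k, i) \<and>
        add_exp (a' k) (\<gamma> k) = add_exp \<theta> \<beta>"
      using gF r'R a'E lmg sm by (simp add: a'_def add_exp_assoc)
  qed
  show ?thesis
    using pv pcond rd' pq xhcond hcond unfolding F'_def by blast
qed

end

context PBWO begin

abbreviation "rp F \<equiv> (red1 R x n m leM F)\<^sup>+\<^sup>+"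

lemma redp_vec: assumes Fv: "\<forall>g\<in>F. vec_in m g \<and> g \<noteq> (\<lambda>_. 0)"
  shows "rp F f h \<Longrightarrow> vec_in m f \<Longrightarrow> vec_in m h"
proof (induction rule: tranclp_induct)
  case (base y) then show ?case using red1_vec[OF Fv] by blast
next
  case (step y z) then show ?case using red1_vec[OF Fv] by blast
qed

lemma part2: assumes Fv: "\<forall>g\<in>F. vec_in m g \<and> g \<noteq> (\<lambda>_. 0)"
  shows "rp F f h \<Longrightarrow> vec_in m f \<Longrightarrow> \<forall>p. vec_in m p \<and> (p = (\<lambda>_. 0) \<or> mgt leM (lm h) (lm p)) \<longrightarrow>
     rp F (\<lambda>i. f i + p i) (\<lambda>i. h i + p i)"
proof (induction rule: tranclp_induct)
  case (base y)
  show ?case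
  proof (intro allI impI)
    fix p assume p: "vec_in m p \<and> (p = (\<lambda>_. 0) \<or> mgt leM (lm y) (lm p))"
    have yv: "vec_in m y" using red1_vec[OF Fv base(2) base(1)] .
    have "y = (\<lambda>_. 0) \<or> mgt leM (lm f) (lm y)" using red_main[OF Fv base(2) zero_exps base(1)] by blast
    hence "p = (\<lambda>_. 0) \<or> mgt leM (lm f) (lm p)" using cond_trans[OF base(2) yv] p by blast
    hence "red1 R x n m leM F (\<lambda>j. f j + p j) (\<lambda>j. y j + p j)" using red_shift[OF base(2)] p base(1) by blast
    thus "rp F (\<lambda>i. f i + p i) (\<lambda>i. y i + p i)" by blast
  qed
next
  case (step y z)
  show ?case
  proof (intro allI impI)
    fix p assume p: "vec_in m p \<and> (p = (\<lambda>_. 0) \<or> mgt leM (lm z) (lm p))"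
    have yv: "vec_in m y" using redp_vec[OF Fv step(1) step(4)] .
    have zv: "vec_in m z" using red1_vec[OF Fv yv step(2)] .
    have "z = (\<lambda>_. 0) \<or> mgt leM (lm y) (lm z)" using red_main[OF Fv yv zero_exps step(2)] by blast
    hence c: "p = (\<lambda>_. 0) \<or> mgt leM (lm y) (lm p)" using cond_trans[OF yv zv] p by blast
    hence "rp F (\<lambda>i. f i + p i) (\<lambda>i. y i + p i)" using step(3)[OF step(4)] p by blast
    moreover have "red1 R x n m leM F (\<lambda>j. y j + p j) (\<lambda>j. z j + p j)" using red_shift[OF yv] p step(2) c by blast
    ultimately show "rp F (\<lambda>i. f i + p i) (\<lambda>i. z i + p i)" by (metis tranclp.trancl_into_trancl)
  qed
qed

lemma part3: assumes Fv: "\<forall>g\<in>F. vec_in m g \<and> g \<noteq> (\<lambda>_. 0)" and th: "\<theta> \<in> exps n"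
  shows "rp F f h \<Longrightarrow> vec_in m f \<longrightarrow> (\<exists>p. vec_in m p \<and> (p = (\<lambda>_. 0) \<or> mgt leM (lm (xv x n \<theta> f)) (lm p))
     \<and> rp F (\<lambda>i. xv x n \<theta> f i + p i) (xv x n \<theta> h))"
proof (induction rule: converse_tranclp_induct)
  case (base y)
  show ?case
  proof
    assume yv: "vec_in m y"
    obtain p where "vec_in m p" "p = (\<lambda>_. 0) \<or> mgt leM (lm (xv x n \<theta> y)) (lm p)"
      "red1 R x n m leM F (\<lambda>i. xv x n \<theta> y i + p i) (xv x n \<theta> h)"
      using red_main[OF Fv yv th base] by blast
    thus "\<exists>p. vec_in m p \<and> (p = (\<lambda>_. 0) \<or> mgt leM (lm (xv x n \<theta> y)) (lm p))
     \<and> rp F (\<lambda>i. xv x n \<theta> y i + p i) (xv x n \<theta> h)" by blast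
  qed
next
  case (step y z)
  show ?case
  proof
    assume yv: "vec_in m y"
    have zv: "vec_in m z" using red1_vec[OF Fv yv step(1)] .
    obtain q where q: "vec_in m q" "q = (\<lambda>_. 0) \<or> mgt leM (lm (xv x n \<theta> z)) (lm q)"
      "rp F (\<lambda>i. xv x n \<theta> z i + q i) (xv x n \<theta> h)" using step(3) zv by blast
    obtain p0 where p0: "vec_in m p0" "p0 = (\<lambda>_. 0) \<or> mgt leM (lm (xv x n \<theta> y)) (lm p0)"
      "red1 R x n m leM F (\<lambda>i. xv x n \<theta> y i + p0 i) (xv x n \<theta> z)"
      "xv x n \<theta> z = (\<lambda>_. 0) \<or> mgt leM (lm (xv x n \<theta> y)) (lm (xv x n \<theta> z))"
      using red_main[OF Fv yv th step(1)] by blast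
    have xyv: "vec_in m (xv x n \<theta> y)" and xzv: "vec_in m (xv x n \<theta> z)" using vec_xv yv zv by auto
    have qc: "q = (\<lambda>_. 0) \<or> mgt leM (lm (xv x n \<theta> y)) (lm q)"
      using cond_trans[OF xyv xzv q(1) p0(4) q(2)] .
    have l: "lm (\<lambda>j. xv x n \<theta> y j + p0 j) = lm (xv x n \<theta> y)" using lm_add_eq[OF xyv p0(1,2)] .
    have r1: "red1 R x n m leM F (\<lambda>j. (xv x n \<theta> y j + p0 j) + q j) (\<lambda>j. xv x n \<theta> z j + q j)"
      using red_shift[OF vec_add[OF xyv p0(1)] q(1) p0(3)] qc l by simp
    have e: "(\<lambda>j. (xv x n \<theta> y j + p0 j) + q j) = (\<lambda>j. xv x n \<theta> y j + (p0 j + q j))"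
      by (simp add: add.assoc)
    have "rp F (\<lambda>j. xv x n \<theta> y j + (p0 j + q j)) (xv x n \<theta> h)"
      using tranclp_into_tranclp2[OF r1 q(3)] e by simp
    moreover have "vec_in m (\<lambda>j. p0 j + q j)" using vec_add[OF p0(1) q(1)] .
    moreover have "(\<lambda>j. p0 j + q j) = (\<lambda>_. 0) \<or> mgt leM (lm (xv x n \<theta> y)) (lm (\<lambda>j. p0 j + q j))"
      using cond_add[OF xyv p0(1) q(1) p0(2) qc] .
    ultimately show "\<exists>p. vec_in m p \<and> (p = (\<lambda>_. 0) \<or> mgt leM (lm (xv x n \<theta> y)) (lm p))
     \<and> rp F (\<lambda>i. xv x n \<theta> y i + p i) (xv x n \<theta> h)" by blast
  qed
qed

lemma part3q: assumes Fv: "\<forall>g\<in>F. vec_in m g \<and> g \<noteq> (\<lambda>_. 0)" and th: "\<theta> \<in> exps n"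
  and q: "quasi_comm R x n"
  shows "rp F f h \<Longrightarrow> vec_in m f \<Longrightarrow> rp F (xv x n \<theta> f) (xv x n \<theta> h)"
proof (induction rule: tranclp_induct)
  case (base y)
  obtain p where "p = (\<lambda>_. 0)" "red1 R x n m leM F (\<lambda>i. xv x n \<theta> f i + p i) (xv x n \<theta> y)"
    using red_main[OF Fv base(2) th base(1)] q by blast
  hence "red1 R x n m leM F (xv x n \<theta> f) (xv x n \<theta> y)" by simp
  thus ?case by blast
next
  case (step y z)
  have yv: "vec_in m y" using redp_vec[OF Fv step(1) step(4)] .
  obtain p where "p = (\<lambda>_. 0)" "red1 R x n m leM F (\<lambda>i. xv x n \<theta> y i + p i) (xv x n \<theta> z)"
    using red_main[OF Fv yv th step(2)] q by blast
  hence "red1 R x n m leM F (xv x n \<theta> y) (xv x n \<theta> z)" by simp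
  thus ?case using step(3)[OF step(4)] by (rule tranclp.trancl_into_trancl[rotated])
qed

end

theorem proposition22:
  fixes R :: "'a::ring_1 set" and x :: "nat \<Rightarrow> 'a" and n m :: nat
    and le :: "(nat \<Rightarrow> nat) \<Rightarrow> (nat \<Rightarrow> nat) \<Rightarrow> bool"
    and leM :: "(nat \<Rightarrow> nat) \<times> nat \<Rightarrow> (nat \<Rightarrow> nat) \<times> nat \<Rightarrow> bool"
    and F :: "(nat \<Rightarrow> 'a) set" and f h :: "nat \<Rightarrow> 'a" and \<theta> :: "nat \<Rightarrow> nat"
  assumes pbw: "sigma_PBW R x n"
    and noeth: "left_noetherian R"
    and ordA: "mon_order_A R x n le"
    and ordM: "mon_order_M R x n m le leM"
    and cinv: "\<forall>\<alpha>\<in>exps n. \<forall>\<beta>\<in>exps n. unit_in R (cab R x n \<alpha> \<beta>)"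
    and Ffin: "finite F"
    and Fvec: "\<forall>g\<in>F. vec_in m g \<and> g \<noteq> (\<lambda>_. 0)"
    and fvec: "vec_in m f" and hvec: "vec_in m h"
    and theta: "\<theta> \<in> exps n"
  shows
    "(red1 R x n m leM F f h \<longrightarrow>
        (\<exists>p. vec_in m p \<and> (p = (\<lambda>_. 0) \<or> mgt leM (lmv R x n m leM (xv x n \<theta> f)) (lmv R x n m leM p))
             \<and> red1 R x n m leM F (\<lambda>i. xv x n \<theta> f i + p i) (xv x n \<theta> h))
      \<and> (quasi_comm R x n \<longrightarrow> red1 R x n m leM F (xv x n \<theta> f) (xv x n \<theta> h)))
   \<and> (redp R x n m leM F f h \<longrightarrow>
        (\<forall>p. vec_in m p \<and> (p = (\<lambda>_. 0) \<or> mgt leM (lmv R x n m leM h) (lmv R x n m leM p)) \<longrightarrow>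
             redp R x n m leM F (\<lambda>i. f i + p i) (\<lambda>i. h i + p i)))
   \<and> (redp R x n m leM F f h \<longrightarrow>
        (\<exists>p. vec_in m p \<and> (p = (\<lambda>_. 0) \<or> mgt leM (lmv R x n m leM (xv x n \<theta> f)) (lmv R x n m leM p))
             \<and> redp R x n m leM F (\<lambda>i. xv x n \<theta> f i + p i) (xv x n \<theta> h))
      \<and> (quasi_comm R x n \<longrightarrow> redp R x n m leM F (xv x n \<theta> f) (xv x n \<theta> h)))
   \<and> (redp R x n m leM F f (\<lambda>_. 0) \<longrightarrow>
        (\<exists>p. vec_in m p \<and> (p = (\<lambda>_. 0) \<or> mgt leM (lmv R x n m leM (xv x n \<theta> f)) (lmv R x n m leM p))
             \<and> redp R x n m leM F (\<lambda>i. xv x n \<theta> f i + p i) (\<lambda>_. 0))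
      \<and> (quasi_comm R x n \<longrightarrow> redp R x n m leM F (xv x n \<theta> f) (\<lambda>_. 0)))"
proof (cases "(1::'a) = 0")
  case True
  have z: "v = (\<lambda>_. 0)" for v :: "nat \<Rightarrow> 'a"
  proof
    fix i
    have "v i = v i * 1" by simp
    also have "\<dots> = 0" using True by simp
    finally show "v i = 0" .
  qed
  have RED: "red1 R x n m leM F u v" for u v
    using z[of u] z[of v] by (simp add: red1_def)
  have REDP: "redp R x n m leM F u v" for u v
    unfolding redp_def using RED by blast
  have V0: "vec_in m (\<lambda>_. (0::'a))" by (simp add: vec_in_def)
  show ?thesis using RED REDP V0 by blast
next
  case False
  interpret P: PBWO R x n m le leM
    using pbw ordA ordM cinv False unfolding PBWO_def PBW_def PBWO_axioms_def by blast
  have xv0: "xv x n \<theta> (\<lambda>_. 0) = (\<lambda>_. 0)" by (simp add: xv_def)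
  have i: "red1 R x n m leM F f h \<longrightarrow>
        (\<exists>p. vec_in m p \<and> (p = (\<lambda>_. 0) \<or> mgt leM (lmv R x n m leM (xv x n \<theta> f)) (lmv R x n m leM p))
             \<and> red1 R x n m leM F (\<lambda>i. xv x n \<theta> f i + p i) (xv x n \<theta> h))
      \<and> (quasi_comm R x n \<longrightarrow> red1 R x n m leM F (xv x n \<theta> f) (xv x n \<theta> h))"
  proof
    assume r: "red1 R x n m leM F f h"
    obtain p where p: "vec_in m p" "p = (\<lambda>_. 0) \<or> mgt leM (lmv R x n m leM (xv x n \<theta> f)) (lmv R x n m leM p)"
      "red1 R x n m leM F (\<lambda>i. xv x n \<theta> f i + p i) (xv x n \<theta> h)" "quasi_comm R x n \<longrightarrow> p = (\<lambda>_. 0)"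
      using P.red_main[OF Fvec fvec theta r] by blast
    have "quasi_comm R x n \<longrightarrow> red1 R x n m leM F (xv x n \<theta> f) (xv x n \<theta> h)"
      using p(3,4) by auto
    thus "(\<exists>p. vec_in m p \<and> (p = (\<lambda>_. 0) \<or> mgt leM (lmv R x n m leM (xv x n \<theta> f)) (lmv R x n m leM p))
             \<and> red1 R x n m leM F (\<lambda>i. xv x n \<theta> f i + p i) (xv x n \<theta> h))
      \<and> (quasi_comm R x n \<longrightarrow> red1 R x n m leM F (xv x n \<theta> f) (xv x n \<theta> h))" using p by blast
  qed
  have ii: "redp R x n m leM F f h \<longrightarrow>
        (\<forall>p. vec_in m p \<and> (p = (\<lambda>_. 0) \<or> mgt leM (lmv R x n m leM h) (lmv R x n m leM p)) \<longrightarrow>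
             redp R x n m leM F (\<lambda>i. f i + p i) (\<lambda>i. h i + p i))"
    unfolding redp_def using P.part2[OF Fvec _ fvec] by blast
  have iii: "redp R x n m leM F f h' \<longrightarrow>
        (\<exists>p. vec_in m p \<and> (p = (\<lambda>_. 0) \<or> mgt leM (lmv R x n m leM (xv x n \<theta> f)) (lmv R x n m leM p))
             \<and> redp R x n m leM F (\<lambda>i. xv x n \<theta> f i + p i) (xv x n \<theta> h'))
      \<and> (quasi_comm R x n \<longrightarrow> redp R x n m leM F (xv x n \<theta> f) (xv x n \<theta> h'))" for h'
    unfolding redp_def using P.part3[OF Fvec theta _] P.part3q[OF Fvec theta _ _ fvec] fvec by blast
  show ?thesis using i ii iii[of h] iii[of "\<lambda>_. 0"] xv0 by simp
qed

end
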